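(* Consider the MPS model and its neural tangent kernel $K_D$ described in the context. For any two inputs $\mathbf{x}^{(i)},\mathbf{x}^{(j)}\in\mathbb{R}^n$, as the bond dimensions $D_1,\dots,D_n\to\infty$ sequentially, $$K_D(\mathbf{x}^{(i)},\mathbf{x}^{(j)})\xrightarrow{\text{Prob.}}\sum_{k=1}^n\phi_k(x^{(i)}_k)\cdot\phi_k(x^{(j)}_k)\prod_{l=1,\,l\neq k}^{n}\sigma_l^2\,\phi_l(x^{(i)}_l)\cdot\phi_l(x^{(j)}_l),$$ a deterministic (static) limit.
   Context: Fix $n\ge 1$, finite physical dimensions $d_1,\dots,d_n$, feature maps $\phi_i:\mathbb{R}\to\mathbb{R}^{d_i}$ with components $\phi_i^{s}$, and constants $\sigma_1,\dots,\sigma_n>0$; $\cdot$ is the Euclidean inner product. For bond dimensions $D_1,\dots,D_n$ put $D_{n+1}=D_1$. The MPS parameters are tensors $A^{(i)}_{s;a,b}$, $s\le d_i$, $a\le D_i$, $b\le D_{i+1}$, initialized with all entries independent, $A^{(i)}_{s;a,b}\sim\mathcal{N}(0,\sigma_i^2/\sqrt{D_iD_{i+1}})$. The MPS output is $\Psi(\mathbf{x})=\sum_{s_1,\dots,s_n}\sum_{a_1,\dots,a_n}A^{(1)}_{s_1;a_1a_2}\cdots A^{(n)}_{s_n;a_na_1}\prod_{i=1}^n\phi_i^{s_i}(x_i)$ for $\mathbf{x}=(x_1,\dots,x_n)$. With learning rates $\eta_k=(D_kD_{k+1})^{-1/2}$, the neural tangent kernel (NTK) of the MPS is $$K_D(\mathbf{x},\mathbf{x}')=\sum_{k=1}^n\eta_k\sum_{s\le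 d_k}\sum_{a\le D_k}\sum_{b\le D_{k+1}}\frac{\partial\Psi(\mathbf{x})}{\partial A^{(k)}_{s;a,b}}\,\frac{\partial\Psi(\mathbf{x}')}{\partial A^{(k)}_{s;a,b}},$$ evaluated at the random initialization. "Sequentially" means iterated limits, the bond dimensions being sent to infinity one after another. *)

theory Defs
  imports "HOL-Probability.Probability"
begin

text \<open>Sites are indexed 0..n-1 (site i corresponds to the paper's site i+1).
  Bond dimensions D :: nat => nat, D i for i < n; the cyclic convention
  D_{n+1} = D_1 is realised by the successor index mps_nxt.\<close>

definition mps_nxt :: "nat \<Rightarrow> nat \<Rightarrow> nat" where
  "mps_nxt n i = Suc i mod n"

text \<open>Parameters: A (i, s, a, b) = A^{(i)}_{s;a,b}. Feature maps: phi i t s = phi_i^s(t).\<close>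

definition mps :: "nat \<Rightarrow> (nat \<Rightarrow> nat) \<Rightarrow> (nat \<Rightarrow> real \<Rightarrow> nat \<Rightarrow> real) \<Rightarrow> (nat \<Rightarrow> nat)
    \<Rightarrow> (nat \<times> nat \<times> nat \<times> nat \<Rightarrow> real) \<Rightarrow> (nat \<Rightarrow> real) \<Rightarrow> real" where
  "mps n d phi D A x =
     (\<Sum>s\<in>PiE {..<n} (\<lambda>i. {..<d i}). \<Sum>a\<in>PiE {..<n} (\<lambda>i. {..<D i}).
        \<Prod>i<n. A (i, s i, a i, a (mps_nxt n i)) * phi i (x i) (s i))"

definition mps_pd :: "nat \<Rightarrow> (nat \<Rightarrow> nat) \<Rightarrow> (nat \<Rightarrow> real \<Rightarrow> nat \<Rightarrow> real) \<Rightarrow> (nat \<Rightarrow> nat)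
    \<Rightarrow> (nat \<times> nat \<times> nat \<times> nat \<Rightarrow> real) \<Rightarrow> nat \<times> nat \<times> nat \<times> nat \<Rightarrow> (nat \<Rightarrow> real) \<Rightarrow> real" where
  "mps_pd n d phi D A idx x = deriv (\<lambda>t. mps n d phi D (A(idx := t)) x) (A idx)"

definition mps_ntk :: "nat \<Rightarrow> (nat \<Rightarrow> nat) \<Rightarrow> (nat \<Rightarrow> real \<Rightarrow> nat \<Rightarrow> real) \<Rightarrow> (nat \<Rightarrow> nat)
    \<Rightarrow> (nat \<times> nat \<times> nat \<times> nat \<Rightarrow> real) \<Rightarrow> (nat \<Rightarrow> real) \<Rightarrow> (nat \<Rightarrow> real) \<Rightarrow> real" where
  "mps_ntk n d phi D A x x' =
     (\<Sum>k<n. (1 / sqrt (real (D k * D (mps_nxt n k)))) *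
        (\<Sum>s<d k. \<Sum>a<D k. \<Sum>b<D (mps_nxt n k).
           mps_pd n d phi D A (k, s, a, b) x * mps_pd n d phi D A (k, s, a, b) x'))"

definition mps_idx :: "nat \<Rightarrow> (nat \<Rightarrow> nat) \<Rightarrow> (nat \<Rightarrow> nat) \<Rightarrow> (nat \<times> nat \<times> nat \<times> nat) set" where
  "mps_idx n d D = {(i, s, a, b). i < n \<and> s < d i \<and> a < D i \<and> b < D (mps_nxt n i)}"

definition mps_init :: "nat \<Rightarrow> (nat \<Rightarrow> nat) \<Rightarrow> (nat \<Rightarrow> real) \<Rightarrow> (nat \<Rightarrow> nat)
    \<Rightarrow> (nat \<times> nat \<times> nat \<times> nat \<Rightarrow> real) measure" where
  "mps_init n d \<sigma> D = PiM (mps_idx n d D) (\<lambda>(i, s, a, b).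
      density lborel (normal_density 0 (sqrt ((\<sigma> i)\<^sup>2 / sqrt (real (D i * D (mps_nxt n i)))))))"

text \<open>Iterated (sequential) eventually: seq_eventually m D P means
  for all sufficiently large D_{m-1}, ..., for all sufficiently large D_0, P D,
  i.e. D_0 is sent to infinity first, then D_1, ..., finally D_{m-1}.\<close>
fun seq_eventually :: "nat \<Rightarrow> (nat \<Rightarrow> nat) \<Rightarrow> ((nat \<Rightarrow> nat) \<Rightarrow> bool) \<Rightarrow> bool" where
  "seq_eventually 0 D P = P D"
| "seq_eventually (Suc k) D P = (\<forall>\<^sub>F m in sequentially. seq_eventually k (D(k := m)) P)"

definition feat_dot :: "(nat \<Rightarrow> nat) \<Rightarrow> (nat \<Rightarrow> real \<Rightarrow> nat \<Rightarrow> real) \<Rightarrow> nat \<Rightarrow> real \<Rightarrow> real \<Rightarrow> real" where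
  "feat_dot d phi l t t' = (\<Sum>s<d l. phi l t s * phi l t' s)"

end

theory Submission
  imports Defs
begin


definition prv :: "nat \<Rightarrow> nat \<Rightarrow> nat" where
  "prv n j = (j + n - 1) mod n"

lemma nxt_lt: "i < n \<Longrightarrow> mps_nxt n i < n"
  by (simp add: mps_nxt_def)

lemma prv_lt: "j < n \<Longrightarrow> prv n j < n"
  by (simp add: prv_def)

lemma prv_nxt: "i < n \<Longrightarrow> prv n (mps_nxt n i) = i"
proof -
  assume i: "i < n"
  show ?thesis
  proof (cases "Suc i = n")
    case True then show ?thesis by (simp add: prv_def mps_nxt_def)
  next
    case False
    then have "Suc i < n" using i by simp
    then show ?thesis by (simp add: prv_def mps_nxt_def)
  qed
qed

lemma nxt_prv: "j < n \<Longrightarrow> mps_nxt n (prv n j) = j"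
proof -
  assume j: "j < n"
  show ?thesis
  proof (cases "j = 0")
    case True
    then show ?thesis using j by (simp add: prv_def mps_nxt_def)
  next
    case False
    then have e: "j + n - 1 = (j - 1) + n" by simp
    have "(j + n - 1) mod n = j - 1" unfolding e using j by simp
    then show ?thesis using j False by (simp add: prv_def mps_nxt_def)
  qed
qed

lemma bij_nxt: "bij_betw (mps_nxt n) {..<n} {..<n}"
  by (rule bij_betw_byWitness[where f'="prv n"]) (auto simp: prv_nxt nxt_prv nxt_lt prv_lt)

lemma prod_nxt_reindex: "(\<Prod>i<n. h (mps_nxt n i)) = (\<Prod>i<n. (h i :: 'a::comm_monoid_mult))"
  using prod.reindex_bij_betw[OF bij_nxt, of h] by simp

lemma cyc_sum:
  fixes V :: "nat \<Rightarrow> 'v set" and c :: "nat \<Rightarrow> 'p \<Rightarrow> real" and w :: "'p \<Rightarrow> 'v \<Rightarrow> real"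
    and \<Phi> :: "nat \<Rightarrow> 'v \<Rightarrow> 'v \<Rightarrow> real"
  assumes fin: "\<And>i. i<n \<Longrightarrow> finite (V i)" "finite P"
  and \<Phi>: "\<And>i p q. i<n \<Longrightarrow> p \<in> V i \<Longrightarrow> q \<in> V (mps_nxt n i) \<Longrightarrow>
            \<Phi> i p q = (\<Sum>\<pi>\<in>P. c i \<pi> * w \<pi> p * w \<pi> q)"
  shows "(\<Sum>z\<in>PiE {..<n} V. \<Prod>i<n. \<Phi> i (z i) (z (mps_nxt n i))) =
         (\<Sum>\<pi>\<in>PiE {..<n} (\<lambda>_. P). (\<Prod>i<n. c i (\<pi> i)) *
              (\<Prod>j<n. \<Sum>v\<in>V j. w (\<pi> j) v * w (\<pi> (prv n j)) v))"
proof -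
  have finZ: "finite (PiE {..<n} V)" using fin by (intro finite_PiE) auto
  have "(\<Sum>z\<in>PiE {..<n} V. \<Prod>i<n. \<Phi> i (z i) (z (mps_nxt n i))) =
        (\<Sum>z\<in>PiE {..<n} V. \<Prod>i<n. \<Sum>\<pi>\<in>P. c i \<pi> * w \<pi> (z i) * w \<pi> (z (mps_nxt n i)))"
    by (intro sum.cong prod.cong refl \<Phi>) (auto simp: PiE_iff nxt_lt)
  also have "\<dots> = (\<Sum>z\<in>PiE {..<n} V. \<Sum>\<pi>\<in>PiE {..<n} (\<lambda>_. P).
                     \<Prod>i<n. c i (\<pi> i) * w (\<pi> i) (z i) * w (\<pi> i) (z (mps_nxt n i)))"
    using fin by (intro sum.cong refl prod_sum_PiE) auto
  also have "\<dots> = (\<Sum>\<pi>\<in>PiE {..<n} (\<lambda>_. P). \<Sum>z\<in>PiE {..<n} V.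
                     \<Prod>i<n. c i (\<pi> i) * w (\<pi> i) (z i) * w (\<pi> i) (z (mps_nxt n i)))"
    by (rule sum.swap)
  also have "\<dots> = (\<Sum>\<pi>\<in>PiE {..<n} (\<lambda>_. P). (\<Prod>i<n. c i (\<pi> i)) *
              (\<Sum>z\<in>PiE {..<n} V. \<Prod>j<n. w (\<pi> j) (z j) * w (\<pi> (prv n j)) (z j)))"
  proof (intro sum.cong refl)
    fix \<pi> assume "\<pi> \<in> PiE {..<n} (\<lambda>_. P)"
    have "(\<Sum>z\<in>PiE {..<n} V. \<Prod>i<n. c i (\<pi> i) * w (\<pi> i) (z i) * w (\<pi> i) (z (mps_nxt n i))) =
          (\<Sum>z\<in>PiE {..<n} V. (\<Prod>i<n. c i (\<pi> i)) * ((\<Prod>i<n. w (\<pi> i) (z i)) * (\<Prod>i<n. w (\<pi> i) (z (mps_nxt n i)))))"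
      by (simp add: prod.distrib mult.assoc)
    also have "\<dots> = (\<Sum>z\<in>PiE {..<n} V. (\<Prod>i<n. c i (\<pi> i)) * ((\<Prod>i<n. w (\<pi> i) (z i)) * (\<Prod>j<n. w (\<pi> (prv n j)) (z j))))"
    proof (intro sum.cong refl arg_cong2[where f="(*)"])
      fix z
      have "(\<Prod>j<n. w (\<pi> (prv n j)) (z j)) = (\<Prod>i<n. w (\<pi> (prv n (mps_nxt n i))) (z (mps_nxt n i)))"
        by (rule prod_nxt_reindex[symmetric])
      also have "\<dots> = (\<Prod>i<n. w (\<pi> i) (z (mps_nxt n i)))"
        by (intro prod.cong refl) (simp add: prv_nxt)
      finally show "(\<Prod>i<n. w (\<pi> i) (z (mps_nxt n i))) = (\<Prod>j<n. w (\<pi> (prv n j)) (z j))" by simp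
    qed
    also have "\<dots> = (\<Prod>i<n. c i (\<pi> i)) *
              (\<Sum>z\<in>PiE {..<n} V. \<Prod>j<n. w (\<pi> j) (z j) * w (\<pi> (prv n j)) (z j))"
      by (simp add: sum_distrib_left prod.distrib)
    finally show "(\<Sum>z\<in>PiE {..<n} V. \<Prod>i<n. c i (\<pi> i) * w (\<pi> i) (z i) * w (\<pi> i) (z (mps_nxt n i))) =
          (\<Prod>i<n. c i (\<pi> i)) *
              (\<Sum>z\<in>PiE {..<n} V. \<Prod>j<n. w (\<pi> j) (z j) * w (\<pi> (prv n j)) (z j))" .
  qed
  also have "\<dots> = (\<Sum>\<pi>\<in>PiE {..<n} (\<lambda>_. P). (\<Prod>i<n. c i (\<pi> i)) *
              (\<Prod>j<n. \<Sum>v\<in>V j. w (\<pi> j) v * w (\<pi> (prv n j)) v))"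
    using fin by (intro sum.cong refl arg_cong2[where f="(*)"] prod_sum_PiE[symmetric]) auto
  finally show ?thesis .
qed

lemma sum_PiE_pair:
  assumes "finite S" "\<And>i. i \<in> S \<Longrightarrow> finite (A i)" "\<And>i. i \<in> S \<Longrightarrow> finite (B i)"
  shows "(\<Sum>a\<in>PiE S A. \<Sum>c\<in>PiE S B. g a c) =
         (\<Sum>u\<in>PiE S (\<lambda>i. A i \<times> B i). g (\<lambda>i\<in>S. fst (u i)) (\<lambda>i\<in>S. snd (u i)))"
proof -
  have "(\<Sum>a\<in>PiE S A. \<Sum>c\<in>PiE S B. g a c) = (\<Sum>(a,c)\<in>PiE S A \<times> PiE S B. g a c)"
    by (rule sum.cartesian_product)
  also have "\<dots> = (\<Sum>u\<in>PiE S (\<lambda>i. A i \<times> B i). g (\<lambda>i\<in>S. fst (u i)) (\<lambda>i\<in>S. snd (u i)))"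
    apply (rule sum.reindex_bij_witness[where i="\<lambda>u. ((\<lambda>i\<in>S. fst (u i)), (\<lambda>i\<in>S. snd (u i)))"
        and j="\<lambda>(a,c). (\<lambda>i\<in>S. (a i, c i))"])
    apply (auto simp: PiE_iff extensional_def fun_eq_iff)
    subgoal for a c
      apply (rule arg_cong2[where f=g])
      apply (auto simp: fun_eq_iff)
      done
    done
  finally show ?thesis .
qed

lemma sum_PiE_pin:
  fixes h :: "'i \<Rightarrow> 'b \<Rightarrow> real"
  assumes "finite S" "\<And>i. i \<in> S \<Longrightarrow> finite (B i)" "k \<in> S" "s0 \<in> B k"
  shows "(\<Sum>s\<in>PiE S B. if s k = s0 then (\<Prod>i\<in>S-{k}. h i (s i)) else 0) =
         (\<Prod>i\<in>S-{k}. \<Sum>t\<in>B i. h i t)"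
proof -
  define h' where "h' i t = (if i = k then (if t = s0 then 1 else 0) else h i t)" for i t
  have "(\<Sum>s\<in>PiE S B. if s k = s0 then (\<Prod>i\<in>S-{k}. h i (s i)) else 0) =
        (\<Sum>s\<in>PiE S B. \<Prod>i\<in>S. h' i (s i))"
  proof (intro sum.cong refl)
    fix s assume "s \<in> PiE S B"
    have "(\<Prod>i\<in>S. h' i (s i)) = h' k (s k) * (\<Prod>i\<in>S-{k}. h' i (s i))"
      using assms by (simp add: prod.remove)
    also have "(\<Prod>i\<in>S-{k}. h' i (s i)) = (\<Prod>i\<in>S-{k}. h i (s i))"
      by (intro prod.cong) (auto simp: h'_def)
    finally show "(if s k = s0 then (\<Prod>i\<in>S-{k}. h i (s i)) else 0) = (\<Prod>i\<in>S. h' i (s i))"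
      by (simp add: h'_def)
  qed
  also have "\<dots> = (\<Prod>i\<in>S. \<Sum>t\<in>B i. h' i t)"
    using assms by (intro prod_sum_PiE[symmetric]) auto
  also have "\<dots> = (\<Sum>t\<in>B k. h' k t) * (\<Prod>i\<in>S-{k}. \<Sum>t\<in>B i. h' i t)"
    using assms by (simp add: prod.remove)
  also have "(\<Sum>t\<in>B k. h' k t) = 1"
    using assms by (simp add: h'_def)
  also have "(\<Prod>i\<in>S-{k}. \<Sum>t\<in>B i. h' i t) = (\<Prod>i\<in>S-{k}. \<Sum>t\<in>B i. h i t)"
    by (intro prod.cong) (auto simp: h'_def)
  finally show ?thesis by simp
qed



definition Mx :: "(nat \<Rightarrow> nat) \<Rightarrow> (nat \<Rightarrow> real \<Rightarrow> nat \<Rightarrow> real) \<Rightarrow> (nat \<Rightarrow> real) \<Rightarrow> nat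
    \<Rightarrow> (nat \<times> nat \<times> nat \<times> nat \<Rightarrow> real) \<Rightarrow> nat \<Rightarrow> nat \<Rightarrow> real" where
  "Mx d phi x i A a b = (\<Sum>t<d i. A (i, t, a, b) * phi i (x i) t)"

definition w0 :: "nat \<times> nat \<Rightarrow> real" where
  "w0 p = (if fst p = snd p then 1 else 0)"

definition Fk :: "(nat \<Rightarrow> nat) \<Rightarrow> (nat \<Rightarrow> real \<Rightarrow> nat \<Rightarrow> real) \<Rightarrow> (nat \<Rightarrow> real) \<Rightarrow> (nat \<Rightarrow> real)
    \<Rightarrow> nat \<Rightarrow> nat \<Rightarrow> (nat \<times> nat \<times> nat \<times> nat \<Rightarrow> real) \<Rightarrow> nat \<times> nat \<Rightarrow> nat \<times> nat \<Rightarrow> real" where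
  "Fk d phi x x' k i A p q = (if i = k then w0 p * w0 q
      else Mx d phi x i A (fst p) (fst q) * Mx d phi x' i A (snd p) (snd q))"

definition V2 :: "(nat \<Rightarrow> nat) \<Rightarrow> nat \<Rightarrow> (nat \<times> nat) set" where
  "V2 D i = {..<D i} \<times> {..<D i}"

definition Tk :: "nat \<Rightarrow> (nat \<Rightarrow> nat) \<Rightarrow> (nat \<Rightarrow> real \<Rightarrow> nat \<Rightarrow> real) \<Rightarrow> (nat \<Rightarrow> nat) \<Rightarrow> (nat \<Rightarrow> real) \<Rightarrow> (nat \<Rightarrow> real)
    \<Rightarrow> nat \<Rightarrow> (nat \<times> nat \<times> nat \<times> nat \<Rightarrow> real) \<Rightarrow> real" where
  "Tk n d phi D x x' k A = (\<Sum>u\<in>PiE {..<n} (V2 D). \<Prod>i<n. Fk d phi x x' k i A (u i) (u (mps_nxt n i)))"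

lemma pd_formula:
  assumes k: "k < n" and s0: "s0 < d k" and al: "\<alpha> < D k" and be: "\<beta> < D (mps_nxt n k)"
  shows "mps_pd n d phi D A (k, s0, \<alpha>, \<beta>) x = phi k (x k) s0 *
     (\<Sum>a\<in>PiE {..<n} (\<lambda>i. {..<D i}). if a k = \<alpha> \<and> a (mps_nxt n k) = \<beta>
          then (\<Prod>i\<in>{..<n}-{k}. Mx d phi x i A (a i) (a (mps_nxt n i))) else 0)"
proof -
  define SS where "SS = PiE {..<n} (\<lambda>i. {..<d i})"
  define AA where "AA = PiE {..<n} (\<lambda>i. {..<D i})"
  define Q where "Q s a = (\<Prod>i\<in>{..<n}-{k}. A (i, s i, a i, a (mps_nxt n i)) * phi i (x i) (s i))" for s a
  define cnd where "cnd s a = (s k = s0 \<and> a k = \<alpha> \<and> a (mps_nxt n k) = \<beta>)" for s :: "nat \<Rightarrow> nat" and a :: "nat \<Rightarrow> nat"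
  define C0 where "C0 = (\<Sum>s\<in>SS. \<Sum>a\<in>AA. (if cnd s a then 0 else A (k, s k, a k, a (mps_nxt n k)) * phi k (x k) (s k)) * Q s a)"
  define C1 where "C1 = (\<Sum>s\<in>SS. \<Sum>a\<in>AA. (if cnd s a then phi k (x k) (s k) else 0) * Q s a)"
  have fin: "finite SS" "finite AA" unfolding SS_def AA_def by (auto intro!: finite_PiE)
  have eq: "mps n d phi D (A((k, s0, \<alpha>, \<beta>) := t)) x = C0 + t * C1" for t
  proof -
    have "mps n d phi D (A((k, s0, \<alpha>, \<beta>) := t)) x =
       (\<Sum>s\<in>SS. \<Sum>a\<in>AA. (if cnd s a then 0 else A (k, s k, a k, a (mps_nxt n k)) * phi k (x k) (s k)) * Q s a
          + t * ((if cnd s a then phi k (x k) (s k) else 0) * Q s a))"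
      unfolding mps_def SS_def[symmetric] AA_def[symmetric]
    proof (intro sum.cong refl)
      fix s a
      have "(\<Prod>i<n. (A((k, s0, \<alpha>, \<beta>) := t)) (i, s i, a i, a (mps_nxt n i)) * phi i (x i) (s i)) =
            ((A((k, s0, \<alpha>, \<beta>) := t)) (k, s k, a k, a (mps_nxt n k)) * phi k (x k) (s k)) *
            (\<Prod>i\<in>{..<n}-{k}. (A((k, s0, \<alpha>, \<beta>) := t)) (i, s i, a i, a (mps_nxt n i)) * phi i (x i) (s i))"
        using k by (subst prod.remove[of _ k]) auto
      also have "(\<Prod>i\<in>{..<n}-{k}. (A((k, s0, \<alpha>, \<beta>) := t)) (i, s i, a i, a (mps_nxt n i)) * phi i (x i) (s i)) = Q s a"
        unfolding Q_def by (intro prod.cong) auto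
      finally show "(\<Prod>i<n. (A((k, s0, \<alpha>, \<beta>) := t)) (i, s i, a i, a (mps_nxt n i)) * phi i (x i) (s i)) =
        (if cnd s a then 0 else A (k, s k, a k, a (mps_nxt n k)) * phi k (x k) (s k)) * Q s a
          + t * ((if cnd s a then phi k (x k) (s k) else 0) * Q s a)"
        by (auto simp: cnd_def)
    qed
    also have "\<dots> = C0 + t * C1"
      unfolding C0_def C1_def by (simp add: sum.distrib sum_distrib_left)
    finally show ?thesis .
  qed
  have "mps_pd n d phi D A (k, s0, \<alpha>, \<beta>) x = C1"
    unfolding mps_pd_def eq
    by (rule DERIV_imp_deriv) (auto intro!: derivative_eq_intros)
  also have "C1 = (\<Sum>a\<in>AA. \<Sum>s\<in>SS. if a k = \<alpha> \<and> a (mps_nxt n k) = \<beta> then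
            phi k (x k) s0 * (if s k = s0 then Q s a else 0) else 0)"
    unfolding C1_def by (subst sum.swap) (auto intro!: sum.cong simp: cnd_def)
  also have "\<dots> = (\<Sum>a\<in>AA. if a k = \<alpha> \<and> a (mps_nxt n k) = \<beta> then
            phi k (x k) s0 * (\<Prod>i\<in>{..<n}-{k}. Mx d phi x i A (a i) (a (mps_nxt n i))) else 0)"
  proof (intro sum.cong refl)
    fix a
    have "(\<Sum>s\<in>SS. if s k = s0 then Q s a else 0) = (\<Prod>i\<in>{..<n}-{k}. Mx d phi x i A (a i) (a (mps_nxt n i)))"
      unfolding SS_def Q_def Mx_def using k s0
      by (subst sum_PiE_pin[where h="\<lambda>i t. A (i, t, a i, a (mps_nxt n i)) * phi i (x i) t"]) auto
    note h = this
    show "(\<Sum>s\<in>SS. if a k = \<alpha> \<and> a (mps_nxt n k) = \<beta> then phi k (x k) s0 * (if s k = s0 then Q s a else 0) else 0) =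
         (if a k = \<alpha> \<and> a (mps_nxt n k) = \<beta> then phi k (x k) s0 * (\<Prod>i\<in>{..<n}-{k}. Mx d phi x i A (a i) (a (mps_nxt n i))) else 0)"
    proof (cases "a k = \<alpha> \<and> a (mps_nxt n k) = \<beta>")
      case True then show ?thesis using h by (simp add: sum_distrib_left[symmetric])
    next
      case False then show ?thesis by (simp only: if_False sum.neutral_const)
    qed
  qed
  also have "\<dots> = phi k (x k) s0 *
     (\<Sum>a\<in>AA. if a k = \<alpha> \<and> a (mps_nxt n k) = \<beta>
          then (\<Prod>i\<in>{..<n}-{k}. Mx d phi x i A (a i) (a (mps_nxt n i))) else 0)"
    by (simp add: sum_distrib_left if_distrib cong: if_cong)
  finally show ?thesis unfolding AA_def .
qed


lemma sum_swap4:
  "(\<Sum>a\<in>A. \<Sum>b\<in>B. \<Sum>u\<in>U. \<Sum>c\<in>C. f a b u c) = (\<Sum>u\<in>U. \<Sum>c\<in>C. \<Sum>a\<in>A. \<Sum>b\<in>B. f a b u c)"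
proof -
  have "(\<Sum>a\<in>A. \<Sum>b\<in>B. \<Sum>u\<in>U. \<Sum>c\<in>C. f a b u c) = (\<Sum>a\<in>A. \<Sum>u\<in>U. \<Sum>b\<in>B. \<Sum>c\<in>C. f a b u c)"
    by (rule sum.cong[OF refl], rule sum.swap)
  also have "\<dots> = (\<Sum>a\<in>A. \<Sum>u\<in>U. \<Sum>c\<in>C. \<Sum>b\<in>B. f a b u c)"
    by (rule sum.cong[OF refl], rule sum.cong[OF refl], rule sum.swap)
  also have "\<dots> = (\<Sum>u\<in>U. \<Sum>a\<in>A. \<Sum>c\<in>C. \<Sum>b\<in>B. f a b u c)"
    by (rule sum.swap)
  also have "\<dots> = (\<Sum>u\<in>U. \<Sum>c\<in>C. \<Sum>a\<in>A. \<Sum>b\<in>B. f a b u c)"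
    by (rule sum.cong[OF refl], rule sum.swap)
  finally show ?thesis .
qed

lemma sum2_delta:
  fixes X Y :: real and a1 a2 b1 b2 N1 N2 :: nat
  assumes "a1 < N1" "b1 < N2"
  shows "(\<Sum>\<alpha><N1. \<Sum>\<beta><N2. (if a1 = \<alpha> \<and> b1 = \<beta> then X else 0) * (if a2 = \<alpha> \<and> b2 = \<beta> then Y else 0))
     = (if a1 = a2 \<and> b1 = b2 then X * Y else 0)"
proof -
  have "\<And>\<alpha> \<beta>. (if a1 = \<alpha> \<and> b1 = \<beta> then X else 0) * (if a2 = \<alpha> \<and> b2 = \<beta> then Y else 0) =
     (if \<alpha> = a1 then (if \<beta> = b1 then (if a1 = a2 \<and> b1 = b2 then X * Y else 0) else 0) else 0)"
    by auto
  then have "(\<Sum>\<alpha><N1. \<Sum>\<beta><N2. (if a1 = \<alpha> \<and> b1 = \<beta> then X else 0) * (if a2 = \<alpha> \<and> b2 = \<beta> then Y else 0))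
     = (\<Sum>\<alpha><N1. if \<alpha> = a1 then (\<Sum>\<beta><N2. if \<beta> = b1 then (if a1 = a2 \<and> b1 = b2 then X * Y else 0) else 0) else 0)"
    by (intro sum.cong refl) simp
  also have "\<dots> = (if a1 = a2 \<and> b1 = b2 then X * Y else 0)"
  proof -
    define Z where "Z = (if a1 = a2 \<and> b1 = b2 then X * Y else 0)"
    have "(\<Sum>\<beta><N2. if \<beta> = b1 then Z else 0) = Z" using assms by simp
    moreover have "(\<Sum>\<alpha><N1. if \<alpha> = a1 then Z else 0) = Z" using assms by simp
    ultimately show ?thesis unfolding Z_def[symmetric] using assms by simp
  qed
  finally show ?thesis .
qed

lemma ntk_formula:
  shows "mps_ntk n d phi D A x x' = (\<Sum>k<n. (1 / sqrt (real (D k * D (mps_nxt n k)))) *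
            (feat_dot d phi k (x k) (x' k) * Tk n d phi D x x' k A))"
  unfolding mps_ntk_def
proof (intro sum.cong refl arg_cong2[where f="(*)"])
  fix k assume "k \<in> {..<n}"
  then have k: "k < n" by simp
  define AA where "AA = PiE {..<n} (\<lambda>i. {..<D i})"
  define G where "G y a = (\<Prod>i\<in>{..<n}-{k}. Mx d phi y i A (a i) (a (mps_nxt n i)))" for y a
  define H where "H y \<alpha> \<beta> = (\<Sum>a\<in>AA. if a k = \<alpha> \<and> a (mps_nxt n k) = \<beta> then G y a else 0)" for y \<alpha> \<beta>
  have finAA: "finite AA" unfolding AA_def by (auto intro!: finite_PiE)
  have "(\<Sum>s<d k. \<Sum>a<D k. \<Sum>b<D (mps_nxt n k).
           mps_pd n d phi D A (k, s, a, b) x * mps_pd n d phi D A (k, s, a, b) x') =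
        (\<Sum>s<d k. \<Sum>a<D k. \<Sum>b<D (mps_nxt n k).
           (phi k (x k) s * phi k (x' k) s) * (H x a b * H x' a b))"
    unfolding H_def G_def AA_def by (intro sum.cong refl) (simp add: pd_formula k)
  also have "\<dots> = (\<Sum>s<d k. (phi k (x k) s * phi k (x' k) s) * (\<Sum>a<D k. \<Sum>b<D (mps_nxt n k). H x a b * H x' a b))"
    by (simp only: sum_distrib_left)
  also have "\<dots> = feat_dot d phi k (x k) (x' k) * (\<Sum>a<D k. \<Sum>b<D (mps_nxt n k). H x a b * H x' a b)"
    by (simp only: feat_dot_def sum_distrib_right)
  also have "(\<Sum>a<D k. \<Sum>b<D (mps_nxt n k). H x a b * H x' a b) =
      (\<Sum>a<D k. \<Sum>b<D (mps_nxt n k). \<Sum>u\<in>AA. \<Sum>c\<in>AA.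
         (if u k = a \<and> u (mps_nxt n k) = b then G x u else 0) * (if c k = a \<and> c (mps_nxt n k) = b then G x' c else 0))"
    unfolding H_def by (simp add: sum_product)
  also have "\<dots> = (\<Sum>u\<in>AA. \<Sum>c\<in>AA. \<Sum>a<D k. \<Sum>b<D (mps_nxt n k).
         (if u k = a \<and> u (mps_nxt n k) = b then G x u else 0) * (if c k = a \<and> c (mps_nxt n k) = b then G x' c else 0))"
    by (rule sum_swap4)
  also have "\<dots> = (\<Sum>u\<in>AA. \<Sum>c\<in>AA. if u k = c k \<and> u (mps_nxt n k) = c (mps_nxt n k) then G x u * G x' c else 0)"
  proof (intro sum.cong refl)
    fix u c assume "u \<in> AA" "c \<in> AA"
    then have "u k < D k" "u (mps_nxt n k) < D (mps_nxt n k)"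
      using k nxt_lt[OF k] by (auto simp: AA_def PiE_iff)
    then show "(\<Sum>a<D k. \<Sum>b<D (mps_nxt n k).
         (if u k = a \<and> u (mps_nxt n k) = b then G x u else 0) * (if c k = a \<and> c (mps_nxt n k) = b then G x' c else 0))
       = (if u k = c k \<and> u (mps_nxt n k) = c (mps_nxt n k) then G x u * G x' c else 0)"
      by (rule sum2_delta)
  qed
  also have "\<dots> = (\<Sum>u\<in>PiE {..<n} (\<lambda>i. {..<D i} \<times> {..<D i}).
      (if (\<lambda>i\<in>{..<n}. fst (u i)) k = (\<lambda>i\<in>{..<n}. snd (u i)) k \<and>
                     (\<lambda>i\<in>{..<n}. fst (u i)) (mps_nxt n k) = (\<lambda>i\<in>{..<n}. snd (u i)) (mps_nxt n k)
                  then G x (\<lambda>i\<in>{..<n}. fst (u i)) * G x' (\<lambda>i\<in>{..<n}. snd (u i)) else 0))"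
    unfolding AA_def by (rule sum_PiE_pair) auto
  also have "\<dots> = Tk n d phi D x x' k A"
    unfolding Tk_def V2_def
  proof (rule sum.cong[OF refl])
    fix u assume u: "u \<in> PiE {..<n} (\<lambda>i. {..<D i} \<times> {..<D i})"
    have nk: "mps_nxt n k < n" using nxt_lt[OF k] .
    have "(\<Prod>i<n. Fk d phi x x' k i A (u i) (u (mps_nxt n i))) =
          Fk d phi x x' k k A (u k) (u (mps_nxt n k)) * (\<Prod>i\<in>{..<n}-{k}. Fk d phi x x' k i A (u i) (u (mps_nxt n i)))"
      using k by (subst prod.remove[of _ k]) auto
    also have "(\<Prod>i\<in>{..<n}-{k}. Fk d phi x x' k i A (u i) (u (mps_nxt n i))) =
       G x (\<lambda>i\<in>{..<n}. fst (u i)) * G x' (\<lambda>i\<in>{..<n}. snd (u i))"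
      unfolding G_def prod.distrib[symmetric]
      by (intro prod.cong refl) (auto simp: Fk_def nxt_lt)
    also have "Fk d phi x x' k k A (u k) (u (mps_nxt n k)) =
       (if fst (u k) = snd (u k) \<and> fst (u (mps_nxt n k)) = snd (u (mps_nxt n k)) then 1 else 0)"
      by (simp add: Fk_def w0_def)
    finally show "(if (\<lambda>i\<in>{..<n}. fst (u i)) k = (\<lambda>i\<in>{..<n}. snd (u i)) k \<and>
                     (\<lambda>i\<in>{..<n}. fst (u i)) (mps_nxt n k) = (\<lambda>i\<in>{..<n}. snd (u i)) (mps_nxt n k)
                  then G x (\<lambda>i\<in>{..<n}. fst (u i)) * G x' (\<lambda>i\<in>{..<n}. snd (u i)) else 0) =
          (\<Prod>i<n. Fk d phi x x' k i A (u i) (u (mps_nxt n i)))"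
      using k nk by (simp add: restrict_def)
  qed
  finally show "(\<Sum>s<d k. \<Sum>a<D k. \<Sum>b<D (mps_nxt n k).
           mps_pd n d phi D A (k, s, a, b) x * mps_pd n d phi D A (k, s, a, b) x') =
      feat_dot d phi k (x k) (x' k) * Tk n d phi D x x' k A" .
qed


definition gN :: "('i \<Rightarrow> real) \<Rightarrow> 'i \<Rightarrow> real measure" where
  "gN sd i = density lborel (normal_density 0 (sd i))"

lemma prob_gN: "sd i > 0 \<Longrightarrow> prob_space (gN sd i)"
  unfolding gN_def by (rule prob_space_normal_density)

lemma space_gN[simp]: "space (gN sd i) = UNIV"
  by (simp add: gN_def)

lemma sets_gN[simp, measurable_cong]: "sets (gN sd i) = sets borel"
  by (simp add: gN_def)

lemma meas_gN: "sd i > 0 \<Longrightarrow> measure (gN sd i) UNIV = 1"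
  using prob_space.prob_space[OF prob_gN[of sd i]] by simp

lemma pps_gN: "(\<And>i. sd i > 0) \<Longrightarrow> product_prob_space (gN sd)"
  by (intro product_prob_spaceI prob_gN)

lemma mom_integrable: "s > 0 \<Longrightarrow> integrable (density lborel (normal_density 0 s)) (\<lambda>t::real. t ^ k)"
  by (subst integrable_density) (use integrable_normal_moment[where \<mu>=0 and \<sigma>=s and k=k] in auto)

lemma mom_integral: "s > 0 \<Longrightarrow> integral\<^sup>L (density lborel (normal_density 0 s)) (\<lambda>t::real. t ^ k) =
    integral\<^sup>L lborel (\<lambda>t. normal_density 0 s t * (t - 0) ^ k)"
  by (subst integral_density) auto

lemma mom_even: assumes s: "s > 0"
  shows "integral\<^sup>L (density lborel (normal_density 0 s)) (\<lambda>t::real. t ^ (2 * k)) = fact (2 * k) / ((2 / s\<^sup>2)^k * fact k)"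
proof -
  have "integral\<^sup>L (density lborel (normal_density 0 s)) (\<lambda>t::real. t ^ (2 * k)) =
    integral\<^sup>L lborel (\<lambda>t. normal_density 0 s t * (t - 0) ^ (2 * k))" by (rule mom_integral[OF s])
  also have "\<dots> = fact (2 * k) / ((2 / s\<^sup>2)^k * fact k)" by (rule integral_normal_moment_even[OF s])
  finally show ?thesis .
qed

lemma mom_odd: assumes s: "s > 0"
  shows "integral\<^sup>L (density lborel (normal_density 0 s)) (\<lambda>t::real. t ^ (2 * k + 1)) = 0"
proof -
  have "integral\<^sup>L (density lborel (normal_density 0 s)) (\<lambda>t::real. t ^ (2 * k + 1)) =
    integral\<^sup>L lborel (\<lambda>t. normal_density 0 s t * (t - 0) ^ (2 * k + 1))" by (rule mom_integral[OF s])
  also have "\<dots> = 0" by (rule integral_normal_moment_odd[OF s])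
  finally show ?thesis .
qed

lemma mom_vals:
  assumes s: "s > 0"
  shows "integral\<^sup>L (density lborel (normal_density 0 s)) (\<lambda>t::real. t ^ 0) = 1"
    "integral\<^sup>L (density lborel (normal_density 0 s)) (\<lambda>t::real. t ^ 1) = 0"
    "integral\<^sup>L (density lborel (normal_density 0 s)) (\<lambda>t::real. t ^ 2) = s\<^sup>2"
    "integral\<^sup>L (density lborel (normal_density 0 s)) (\<lambda>t::real. t ^ 3) = 0"
    "integral\<^sup>L (density lborel (normal_density 0 s)) (\<lambda>t::real. t ^ 4) = 3 * s ^ 4"
proof -
  show "integral\<^sup>L (density lborel (normal_density 0 s)) (\<lambda>t::real. t ^ 0) = 1"
    using mom_even[OF s, of 0] by simp
  show "integral\<^sup>L (density lborel (normal_density 0 s)) (\<lambda>t::real. t ^ 1) = 0"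
    using mom_odd[OF s, of 0] by simp
  show "integral\<^sup>L (density lborel (normal_density 0 s)) (\<lambda>t::real. t ^ 3) = 0"
    using mom_odd[OF s, of 1] by (simp add: numeral_3_eq_3)
  show "integral\<^sup>L (density lborel (normal_density 0 s)) (\<lambda>t::real. t ^ 2) = s\<^sup>2"
    using mom_even[OF s, of 1] s by simp
  have "(fact 4 :: real) = 24" by (simp add: fact_numeral)
  moreover have "(fact 2 :: real) = 2" by (simp add: fact_numeral)
  ultimately show "integral\<^sup>L (density lborel (normal_density 0 s)) (\<lambda>t::real. t ^ 4) = 3 * s ^ 4"
    using mom_even[OF s, of 2] s
    by (simp add: field_simps power_mult_distrib power2_eq_square) (simp add: eval_nat_numeral)
qed

lemma monomial_integral:
  fixes e :: "'i \<Rightarrow> nat"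
  assumes sd: "\<And>i. sd i > 0" and S: "finite S"
  shows "integrable (PiM S (gN sd)) (\<lambda>y. \<Prod>i\<in>S. y i ^ e i)"
    "integral\<^sup>L (PiM S (gN sd)) (\<lambda>y. \<Prod>i\<in>S. y i ^ e i) = (\<Prod>i\<in>S. integral\<^sup>L (gN sd i) (\<lambda>t. t ^ e i))"
proof -
  interpret product_prob_space "gN sd" using pps_gN[OF sd] .
  have int: "integrable (gN sd i) (\<lambda>t. t ^ e i)" for i
    unfolding gN_def using mom_integrable[OF sd] .
  show "integrable (PiM S (gN sd)) (\<lambda>y. \<Prod>i\<in>S. y i ^ e i)"
    using product_integrable_prod[OF S, of "\<lambda>i t. t ^ e i"] int by simp
  show "integral\<^sup>L (PiM S (gN sd)) (\<lambda>y. \<Prod>i\<in>S. y i ^ e i) = (\<Prod>i\<in>S. integral\<^sup>L (gN sd i) (\<lambda>t. t ^ e i))"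
    using product_integral_prod[OF S, of "\<lambda>i t. t ^ e i"] int by simp
qed

lemma prod_pow_ind:
  fixes f :: "'i \<Rightarrow> real"
  assumes "finite S" "a \<in> S"
  shows "(\<Prod>i\<in>S. f i ^ (if i = a then 1 else 0)) = f a"
proof -
  have "(\<Prod>i\<in>S. f i ^ (if i = a then 1 else 0)) = (\<Prod>i\<in>S. if i = a then f i else 1)"
    by (intro prod.cong) auto
  also have "\<dots> = f a" using assms by (simp add: prod.delta)
  finally show ?thesis .
qed

definition ind :: "'a \<Rightarrow> 'a \<Rightarrow> nat" where "ind a b = (if a = b then 1 else 0)"

lemma prod4_monomial:
  fixes y :: "'i \<Rightarrow> real"
  assumes "finite S" "a \<in> S" "b \<in> S" "c \<in> S" "e \<in> S"
  shows "y a * y b * y c * y e = (\<Prod>i\<in>S. y i ^ (ind i a + ind i b + ind i c + ind i e))"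
proof -
  have "(\<Prod>i\<in>S. y i ^ (ind i a + ind i b + ind i c + ind i e)) =
    (\<Prod>i\<in>S. y i ^ ind i a) * (\<Prod>i\<in>S. y i ^ ind i b) * (\<Prod>i\<in>S. y i ^ ind i c) * (\<Prod>i\<in>S. y i ^ ind i e)"
    by (simp only: power_add prod.distrib)
  then show ?thesis unfolding ind_def using assms by (simp only: prod_pow_ind)
qed

lemma prod2_monomial:
  fixes y :: "'i \<Rightarrow> real"
  assumes "finite S" "a \<in> S" "b \<in> S"
  shows "y a * y b = (\<Prod>i\<in>S. y i ^ (ind i a + ind i b))"
proof -
  have "(\<Prod>i\<in>S. y i ^ (ind i a + ind i b)) = (\<Prod>i\<in>S. y i ^ ind i a) * (\<Prod>i\<in>S. y i ^ ind i b)"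
    by (simp only: power_add prod.distrib)
  then show ?thesis unfolding ind_def using assms by (simp only: prod_pow_ind)
qed

lemma prod_support:
  fixes m :: "'i \<Rightarrow> real"
  assumes "finite S" "T \<subseteq> S" "\<And>i. i \<in> S - T \<Longrightarrow> m i = 1"
  shows "(\<Prod>i\<in>S. m i) = (\<Prod>i\<in>T. m i)"
  using assms by (intro prod.mono_neutral_right) auto

definition mv :: "nat \<Rightarrow> real \<Rightarrow> real" where
  "mv k s = (if k = 0 then 1 else if k = 1 then 0 else if k = 2 then s\<^sup>2 else if k = 3 then 0 else 3 * (s\<^sup>2)\<^sup>2)"

lemma mom_mv:
  assumes sd: "sd i > 0" and k: "k \<le> 4"
  shows "integral\<^sup>L (gN sd i) (\<lambda>t. t ^ k) = mv k (sd i)"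
proof -
  have "k = 0 \<or> k = 1 \<or> k = 2 \<or> k = 3 \<or> k = 4" using k by auto
  then show ?thesis using mom_vals[OF sd] unfolding gN_def mv_def
    by (auto simp: power2_eq_square power4_eq_xxxx)
qed

lemma wick2:
  assumes sd: "\<And>i. sd i > 0" and S: "finite S" and ab: "a \<in> S" "b \<in> S"
  shows "integrable (PiM S (gN sd)) (\<lambda>y. y a * y b)"
    "integral\<^sup>L (PiM S (gN sd)) (\<lambda>y. y a * y b) = (if a = b then (sd a)\<^sup>2 else 0)"
proof -
  define e where "e i = ind i a + ind i b" for i
  have eq: "(\<lambda>y. y a * y b :: real) = (\<lambda>y. \<Prod>i\<in>S. y i ^ e i)"
    unfolding e_def by (rule ext, rule prod2_monomial[OF S ab])
  show "integrable (PiM S (gN sd)) (\<lambda>y. y a * y b)"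
    unfolding eq by (rule monomial_integral[OF sd S])
  have m: "integral\<^sup>L (gN sd i) (\<lambda>t. t ^ e i) = mv (e i) (sd i)" for i
    by (rule mom_mv[where sd=sd, OF sd]) (simp add: e_def ind_def)
  have "integral\<^sup>L (PiM S (gN sd)) (\<lambda>y. y a * y b) = (\<Prod>i\<in>S. integral\<^sup>L (gN sd i) (\<lambda>t. t ^ e i))"
    unfolding eq by (rule monomial_integral[OF sd S])
  also have "\<dots> = (\<Prod>i\<in>S. mv (e i) (sd i))" by (simp add: m)
  also have "\<dots> = (\<Prod>i\<in>{a,b}. mv (e i) (sd i))"
    using ab S by (intro prod_support) (auto simp: mv_def e_def ind_def)
  also have "\<dots> = (if a = b then (sd a)\<^sup>2 else 0)"
    by (cases "a = b") (simp_all add: mv_def e_def ind_def prod.insert_if)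
  finally show "integral\<^sup>L (PiM S (gN sd)) (\<lambda>y. y a * y b) = (if a = b then (sd a)\<^sup>2 else 0)" .
qed

lemma wick4:
  assumes sd: "\<And>i. sd i > 0" and S: "finite S" and abce: "a \<in> S" "b \<in> S" "c \<in> S" "e \<in> S"
  shows "integrable (PiM S (gN sd)) (\<lambda>y. y a * y b * y c * y e)"
    "integral\<^sup>L (PiM S (gN sd)) (\<lambda>y. y a * y b * y c * y e) =
      (if a = b \<and> c = e then (sd a)\<^sup>2 * (sd c)\<^sup>2 else 0) +
      (if a = c \<and> b = e then (sd a)\<^sup>2 * (sd b)\<^sup>2 else 0) +
      (if a = e \<and> b = c then (sd a)\<^sup>2 * (sd b)\<^sup>2 else 0)"
proof -
  define k where "k i = ind i a + ind i b + ind i c + ind i e" for i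
  have eq: "(\<lambda>y. y a * y b * y c * y e :: real) = (\<lambda>y. \<Prod>i\<in>S. y i ^ k i)"
    unfolding k_def by (rule ext, rule prod4_monomial[OF S abce])
  show "integrable (PiM S (gN sd)) (\<lambda>y. y a * y b * y c * y e)"
    unfolding eq by (rule monomial_integral[OF sd S])
  have m: "integral\<^sup>L (gN sd i) (\<lambda>t. t ^ k i) = mv (k i) (sd i)" for i
    by (rule mom_mv[where sd=sd, OF sd]) (simp add: k_def ind_def)
  have "integral\<^sup>L (PiM S (gN sd)) (\<lambda>y. y a * y b * y c * y e) = (\<Prod>i\<in>S. integral\<^sup>L (gN sd i) (\<lambda>t. t ^ k i))"
    unfolding eq by (rule monomial_integral[OF sd S])
  also have "\<dots> = (\<Prod>i\<in>S. mv (k i) (sd i))" by (simp add: m)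
  also have "\<dots> = (\<Prod>i\<in>{a,b,c,e}. mv (k i) (sd i))"
    using abce S by (intro prod_support) (auto simp: mv_def k_def ind_def)
  also have "\<dots> = (if a = b \<and> c = e then (sd a)\<^sup>2 * (sd c)\<^sup>2 else 0) +
      (if a = c \<and> b = e then (sd a)\<^sup>2 * (sd b)\<^sup>2 else 0) +
      (if a = e \<and> b = c then (sd a)\<^sup>2 * (sd b)\<^sup>2 else 0)"
    by (cases "a = b"; cases "a = c"; cases "a = e"; cases "b = c"; cases "b = e"; cases "c = e")
       (simp_all add: k_def ind_def mv_def prod.insert_if)
  finally show "integral\<^sup>L (PiM S (gN sd)) (\<lambda>y. y a * y b * y c * y e) =
      (if a = b \<and> c = e then (sd a)\<^sup>2 * (sd c)\<^sup>2 else 0) +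
      (if a = c \<and> b = e then (sd a)\<^sup>2 * (sd b)\<^sup>2 else 0) +
      (if a = e \<and> b = c then (sd a)\<^sup>2 * (sd b)\<^sup>2 else 0)" .
qed


lemma coord_indep:
  assumes sd: "\<And>i. sd i > 0" and I: "finite I"
  shows "prob_space.indep_vars (PiM I (gN sd)) (gN sd) (\<lambda>i \<omega>. \<omega> i) I"
proof -
  interpret prob_space "PiM I (gN sd)" by (rule prob_space_PiM) (simp add: prob_gN sd)
  show ?thesis
  proof (cases "I = {}")
    case True
    show ?thesis unfolding indep_vars_def indep_sets_def using True by simp
  next
    case False
    show ?thesis
    proof (subst indep_vars_iff_distr_eq_PiM'[OF False])
      show "random_variable (gN sd i) (\<lambda>\<omega>. \<omega> i)" if "i \<in> I" for i
        using that by simp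
      have "distr (PiM I (gN sd)) (PiM I (gN sd)) (\<lambda>x. \<lambda>i\<in>I. x i) = distr (PiM I (gN sd)) (PiM I (gN sd)) (\<lambda>x. x)"
        by (intro distr_cong refl) (auto simp: space_PiM PiE_def extensional_def restrict_def fun_eq_iff)
      also have "\<dots> = PiM I (gN sd)" by (rule distr_id2) simp
      also have "\<dots> = PiM I (\<lambda>i. distr (PiM I (gN sd)) (gN sd i) (\<lambda>x. x i))"
        by (intro PiM_cong refl distr_PiM_component[symmetric]) (simp_all add: prob_gN sd)
      finally show "distr (PiM I (gN sd)) (PiM I (gN sd)) (\<lambda>x. \<lambda>i\<in>I. x i) =
          PiM I (\<lambda>i. distr (PiM I (gN sd)) (gN sd i) (\<lambda>x. x i))" .
    qed
  qed
qed

lemma site_distr: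
  assumes sd: "\<And>i. sd i > 0" and I: "finite I" and L: "L \<noteq> {}"
    and K: "\<And>j. j \<in> L \<Longrightarrow> K j \<subseteq> I" and disj: "disjoint_family_on K L"
  shows "distr (PiM I (gN sd)) (PiM L (\<lambda>j. PiM (K j) (gN sd))) (\<lambda>\<omega>. \<lambda>j\<in>L. restrict \<omega> (K j)) =
         PiM L (\<lambda>j. PiM (K j) (gN sd))"
proof -
  interpret prob_space "PiM I (gN sd)" by (rule prob_space_PiM) (simp add: prob_gN sd)
  have ind: "indep_vars (\<lambda>j. PiM (K j) (gN sd)) (\<lambda>j \<omega>. restrict (\<lambda>i. \<omega> i) (K j)) L"
    by (rule indep_vars_restrict[OF coord_indep[OF sd I] K disj])
  have "distr (PiM I (gN sd)) (PiM L (\<lambda>j. PiM (K j) (gN sd))) (\<lambda>\<omega>. \<lambda>j\<in>L. restrict (\<lambda>i. \<omega> i) (K j)) =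
        PiM L (\<lambda>j. distr (PiM I (gN sd)) (PiM (K j) (gN sd)) (\<lambda>\<omega>. restrict (\<lambda>i. \<omega> i) (K j)))"
  proof (rule indep_vars_iff_distr_eq_PiM'[OF L, THEN iffD1, OF _ ind])
    show "random_variable (PiM (K j) (gN sd)) (\<lambda>\<omega>. restrict (\<lambda>i. \<omega> i) (K j))" if "j \<in> L" for j
      using K[OF that] by (intro measurable_restrict) auto
  qed
  also have "\<dots> = PiM L (\<lambda>j. PiM (K j) (gN sd))"
    by (intro PiM_cong refl product_prob_space.distr_restrict[OF pps_gN[OF sd], symmetric, OF K I, unfolded eta_contract_eq])
  finally show ?thesis by simp
qed

lemma site_indep:
  fixes L :: "nat set" and sd :: "'i \<Rightarrow> real" and g :: "nat \<Rightarrow> ('i \<Rightarrow> real) \<Rightarrow> real"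
  assumes sd: "\<And>i. sd i > 0" and I: "finite I" and L: "finite L" "L \<noteq> {}"
    and K: "\<And>j. j \<in> L \<Longrightarrow> K j \<subseteq> I" and disj: "disjoint_family_on K L"
    and gm: "\<And>j. j \<in> L \<Longrightarrow> g j \<in> borel_measurable (PiM (K j) (gN sd))"
    and gi: "\<And>j. j \<in> L \<Longrightarrow> integrable (PiM (K j) (gN sd)) (g j)"
  shows "integrable (PiM I (gN sd)) (\<lambda>\<omega>. \<Prod>j\<in>L. g j (restrict \<omega> (K j)))"
    "integral\<^sup>L (PiM I (gN sd)) (\<lambda>\<omega>. \<Prod>j\<in>L. g j (restrict \<omega> (K j))) =
       (\<Prod>j\<in>L. integral\<^sup>L (PiM (K j) (gN sd)) (g j))"
proof -
  have pss: "product_sigma_finite (\<lambda>j. PiM (K j) (gN sd))"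
    unfolding product_sigma_finite_def
    by (auto intro!: prob_space_imp_sigma_finite prob_space_PiM simp: prob_gN sd)
  define \<Phi> where "\<Phi> = (\<lambda>\<omega>::_ \<Rightarrow> real. \<lambda>j\<in>L. restrict \<omega> (K j))"
  have \<Phi>m: "\<Phi> \<in> measurable (PiM I (gN sd)) (PiM L (\<lambda>j. PiM (K j) (gN sd)))"
    unfolding \<Phi>_def using K by (intro measurable_restrict measurable_restrict_subset) auto
  have D: "distr (PiM I (gN sd)) (PiM L (\<lambda>j. PiM (K j) (gN sd))) \<Phi> = PiM L (\<lambda>j. PiM (K j) (gN sd))"
    unfolding \<Phi>_def by (rule site_distr[OF sd I L(2) K disj])
  have Gm: "(\<lambda>y. \<Prod>j\<in>L. g j (y j)) \<in> borel_measurable (PiM L (\<lambda>j. PiM (K j) (gN sd)))"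
  proof (rule borel_measurable_prod)
    fix j assume j: "j \<in> L"
    show "(\<lambda>y. g j (y j)) \<in> borel_measurable (PiM L (\<lambda>j. PiM (K j) (gN sd)))"
      by (rule measurable_compose[OF measurable_component_singleton[where M="\<lambda>j. PiM (K j) (gN sd)", OF j] gm[OF j]])
  qed
  have Gi: "integrable (PiM L (\<lambda>j. PiM (K j) (gN sd))) (\<lambda>y. \<Prod>j\<in>L. g j (y j))"
    by (rule product_sigma_finite.product_integrable_prod[OF pss L(1) gi])
  have eq: "(\<lambda>\<omega>. \<Prod>j\<in>L. g j (restrict \<omega> (K j))) = (\<lambda>\<omega>. \<Prod>j\<in>L. g j (\<Phi> \<omega> j))"
    unfolding \<Phi>_def by (intro ext prod.cong refl) simp
  show "integrable (PiM I (gN sd)) (\<lambda>\<omega>. \<Prod>j\<in>L. g j (restrict \<omega> (K j)))"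
  proof -
    have "integrable (distr (PiM I (gN sd)) (PiM L (\<lambda>j. PiM (K j) (gN sd))) \<Phi>) (\<lambda>y. \<Prod>j\<in>L. g j (y j))"
      unfolding D by (rule Gi)
    then show ?thesis unfolding eq by (rule integrable_distr_eq[OF \<Phi>m Gm, THEN iffD1])
  qed
  have "integral\<^sup>L (PiM I (gN sd)) (\<lambda>\<omega>. \<Prod>j\<in>L. g j (\<Phi> \<omega> j)) =
        integral\<^sup>L (distr (PiM I (gN sd)) (PiM L (\<lambda>j. PiM (K j) (gN sd))) \<Phi>) (\<lambda>y. \<Prod>j\<in>L. g j (y j))"
    by (rule integral_distr[OF \<Phi>m Gm, symmetric])
  also have "\<dots> = (\<Prod>j\<in>L. integral\<^sup>L (PiM (K j) (gN sd)) (g j))"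
    unfolding D by (rule product_sigma_finite.product_integral_prod[OF pss L(1) gi])
  finally show "integral\<^sup>L (PiM I (gN sd)) (\<lambda>\<omega>. \<Prod>j\<in>L. g j (restrict \<omega> (K j))) =
       (\<Prod>j\<in>L. integral\<^sup>L (PiM (K j) (gN sd)) (g j))" unfolding eq .
qed


lemma sum_delta_pair:
  fixes f g :: "nat \<Rightarrow> real"
  shows "(\<Sum>t1<N. \<Sum>t2<N. f t1 * g t2 * (if t1 = t2 then 1 else 0)) = (\<Sum>t<N. f t * g t)"
proof (rule sum.cong[OF refl])
  fix t1 assume "t1 \<in> {..<N}"
  then show "(\<Sum>t2<N. f t1 * g t2 * (if t1 = t2 then 1 else 0)) = f t1 * g t1"
    by (simp add: if_distrib cong: if_cong)
qed

lemma L12: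
  fixes f1 f2 f3 f4 :: "nat \<Rightarrow> real"
  shows "(\<Sum>t1<N. \<Sum>t2<N. \<Sum>t3<N. \<Sum>t4<N. f1 t1 * f2 t2 * f3 t3 * f4 t4 * (if t1 = t2 \<and> t3 = t4 then 1 else 0))
    = (\<Sum>t<N. f1 t * f2 t) * (\<Sum>t<N. f3 t * f4 t)"
proof -
  have "(\<Sum>t<N. f1 t * f2 t) * (\<Sum>t<N. f3 t * f4 t) =
    (\<Sum>t1<N. \<Sum>t2<N. f1 t1 * f2 t2 * (if t1 = t2 then 1 else 0)) * (\<Sum>t3<N. \<Sum>t4<N. f3 t3 * f4 t4 * (if t3 = t4 then 1 else 0))"
    by (simp only: sum_delta_pair)
  also have "\<dots> = (\<Sum>t1<N. \<Sum>t2<N. \<Sum>t3<N. \<Sum>t4<N. (f1 t1 * f2 t2 * (if t1 = t2 then 1 else 0)) * (f3 t3 * f4 t4 * (if t3 = t4 then 1 else 0)))"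
    by (simp only: sum_distrib_right, simp only: sum_distrib_left)
  also have "\<dots> = (\<Sum>t1<N. \<Sum>t2<N. \<Sum>t3<N. \<Sum>t4<N. f1 t1 * f2 t2 * f3 t3 * f4 t4 * (if t1 = t2 \<and> t3 = t4 then 1 else 0))"
    by (intro sum.cong refl) auto
  finally show ?thesis ..
qed

lemma L13:
  fixes f1 f2 f3 f4 :: "nat \<Rightarrow> real"
  shows "(\<Sum>t1<N. \<Sum>t2<N. \<Sum>t3<N. \<Sum>t4<N. f1 t1 * f2 t2 * f3 t3 * f4 t4 * (if t1 = t3 \<and> t2 = t4 then 1 else 0))
    = (\<Sum>t<N. f1 t * f3 t) * (\<Sum>t<N. f2 t * f4 t)"
proof -
  have "(\<Sum>t<N. f1 t * f3 t) * (\<Sum>t<N. f2 t * f4 t) =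
    (\<Sum>t1<N. \<Sum>t3<N. f1 t1 * f3 t3 * (if t1 = t3 then 1 else 0)) * (\<Sum>t2<N. \<Sum>t4<N. f2 t2 * f4 t4 * (if t2 = t4 then 1 else 0))"
    by (simp only: sum_delta_pair)
  also have "\<dots> = (\<Sum>t1<N. \<Sum>t3<N. \<Sum>t2<N. \<Sum>t4<N. (f1 t1 * f3 t3 * (if t1 = t3 then 1 else 0)) * (f2 t2 * f4 t4 * (if t2 = t4 then 1 else 0)))"
    by (simp only: sum_distrib_right, simp only: sum_distrib_left)
  also have "\<dots> = (\<Sum>t1<N. \<Sum>t2<N. \<Sum>t3<N. \<Sum>t4<N. (f1 t1 * f3 t3 * (if t1 = t3 then 1 else 0)) * (f2 t2 * f4 t4 * (if t2 = t4 then 1 else 0)))"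
    by (rule sum.cong[OF refl], rule sum.swap)
  also have "\<dots> = (\<Sum>t1<N. \<Sum>t2<N. \<Sum>t3<N. \<Sum>t4<N. f1 t1 * f2 t2 * f3 t3 * f4 t4 * (if t1 = t3 \<and> t2 = t4 then 1 else 0))"
    by (intro sum.cong refl) auto
  finally show ?thesis ..
qed

lemma L14:
  fixes f1 f2 f3 f4 :: "nat \<Rightarrow> real"
  shows "(\<Sum>t1<N. \<Sum>t2<N. \<Sum>t3<N. \<Sum>t4<N. f1 t1 * f2 t2 * f3 t3 * f4 t4 * (if t1 = t4 \<and> t2 = t3 then 1 else 0))
    = (\<Sum>t<N. f1 t * f4 t) * (\<Sum>t<N. f2 t * f3 t)"
proof -
  have "(\<Sum>t<N. f1 t * f4 t) * (\<Sum>t<N. f2 t * f3 t) =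
    (\<Sum>t1<N. \<Sum>t4<N. f1 t1 * f4 t4 * (if t1 = t4 then 1 else 0)) * (\<Sum>t2<N. \<Sum>t3<N. f2 t2 * f3 t3 * (if t2 = t3 then 1 else 0))"
    by (simp only: sum_delta_pair)
  also have "\<dots> = (\<Sum>t1<N. \<Sum>t4<N. \<Sum>t2<N. \<Sum>t3<N. (f1 t1 * f4 t4 * (if t1 = t4 then 1 else 0)) * (f2 t2 * f3 t3 * (if t2 = t3 then 1 else 0)))"
    by (simp only: sum_distrib_right, simp only: sum_distrib_left)
  also have "\<dots> = (\<Sum>t1<N. \<Sum>t2<N. \<Sum>t4<N. \<Sum>t3<N. (f1 t1 * f4 t4 * (if t1 = t4 then 1 else 0)) * (f2 t2 * f3 t3 * (if t2 = t3 then 1 else 0)))"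
    by (rule sum.cong[OF refl], rule sum.swap)
  also have "\<dots> = (\<Sum>t1<N. \<Sum>t2<N. \<Sum>t3<N. \<Sum>t4<N. (f1 t1 * f4 t4 * (if t1 = t4 then 1 else 0)) * (f2 t2 * f3 t3 * (if t2 = t3 then 1 else 0)))"
    by (rule sum.cong[OF refl], rule sum.cong[OF refl], rule sum.swap)
  also have "\<dots> = (\<Sum>t1<N. \<Sum>t2<N. \<Sum>t3<N. \<Sum>t4<N. f1 t1 * f2 t2 * f3 t3 * f4 t4 * (if t1 = t4 \<and> t2 = t3 then 1 else 0))"
    by (intro sum.cong refl) auto
  finally show ?thesis ..
qed


locale mps_set =
  fixes n :: nat and d :: "nat \<Rightarrow> nat" and phi :: "nat \<Rightarrow> real \<Rightarrow> nat \<Rightarrow> real"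
    and \<sigma> :: "nat \<Rightarrow> real" and x x' :: "nat \<Rightarrow> real" and D :: "nat \<Rightarrow> nat"
  assumes n1: "n \<ge> 1" and \<sigma>pos: "\<And>i. i < n \<Longrightarrow> \<sigma> i > 0" and Dpos: "\<And>i. i < n \<Longrightarrow> D i \<ge> 1"
begin

definition "I = mps_idx n d D"
definition "Ks j = {\<iota> \<in> I. fst \<iota> = j}"
definition "r i = 1 / sqrt (real (D i * D (mps_nxt n i)))"
definition "v i = (\<sigma> i)\<^sup>2 / sqrt (real (D i * D (mps_nxt n i)))"
definition "sdv \<iota> = (if \<iota> \<in> I then sqrt (v (fst \<iota>)) else 1)"
definition "\<alpha> i = feat_dot d phi i (x i) (x i)"
definition "\<beta> i = feat_dot d phi i (x' i) (x' i)"
definition "\<gamma> i = feat_dot d phi i (x i) (x' i)"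

lemma I_iff: "(i, t, a, b) \<in> I \<longleftrightarrow> i < n \<and> t < d i \<and> a < D i \<and> b < D (mps_nxt n i)"
  by (simp add: I_def mps_idx_def)

lemma finite_I: "finite I"
proof -
  have "I \<subseteq> {..<n} \<times> {..<Max (d ` {..<n})+1} \<times> {..<Max (D ` {..<n})+1} \<times> {..<Max (D ` {..<n})+1}"
  proof
    fix \<iota> assume "\<iota> \<in> I"
    then obtain i t a b where \<iota>: "\<iota> = (i,t,a,b)" "i < n" "t < d i" "a < D i" "b < D (mps_nxt n i)"
      by (cases \<iota>) (auto simp: I_iff)
    have h: "d i \<le> Max (d ` {..<n})" "D i \<le> Max (D ` {..<n})" "D (mps_nxt n i) \<le> Max (D ` {..<n})"
      using \<iota>(2) nxt_lt[OF \<iota>(2)] by (auto intro!: Max_ge)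
    have "t < Max (d ` {..<n})+1" "a < Max (D ` {..<n})+1" "b < Max (D ` {..<n})+1"
      using h \<iota> by linarith+
    then show "\<iota> \<in> {..<n} \<times> {..<Max (d ` {..<n})+1} \<times> {..<Max (D ` {..<n})+1} \<times> {..<Max (D ` {..<n})+1}"
      using \<iota> by simp
  qed
  then show ?thesis by (rule finite_subset) auto
qed

lemma finite_Ks: "finite (Ks j)"
  unfolding Ks_def using finite_I by simp

lemma Ks_sub: "Ks j \<subseteq> I" by (auto simp: Ks_def)

lemma Ks_disj: "disjoint_family_on Ks L"
  by (auto simp: disjoint_family_on_def Ks_def)

lemma Ks_iff: "(i, t, a, b) \<in> Ks j \<longleftrightarrow> j = i \<and> i < n \<and> t < d i \<and> a < D i \<and> b < D (mps_nxt n i)"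
  by (auto simp: Ks_def I_iff)

lemma DD_pos: "i < n \<Longrightarrow> sqrt (real (D i * D (mps_nxt n i))) > 0"
proof -
  assume i: "i < n"
  have "D i \<ge> 1" "D (mps_nxt n i) \<ge> 1" using Dpos[OF i] Dpos[OF nxt_lt[OF i]] by auto
  then have "D i * D (mps_nxt n i) > 0" by simp
  then show ?thesis by simp
qed

lemma v_pos: "i < n \<Longrightarrow> v i > 0"
  unfolding v_def using \<sigma>pos[of i] DD_pos[of i] by (auto intro!: divide_pos_pos)

lemma r_pos: "i < n \<Longrightarrow> r i > 0"
  unfolding r_def using DD_pos[of i] by (auto intro!: divide_pos_pos)

lemma v_r: "v i = (\<sigma> i)\<^sup>2 * r i"
  by (simp add: v_def r_def)

lemma sdv_pos: "sdv \<iota> > 0"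
  unfolding sdv_def using v_pos by (cases \<iota>) (auto simp: I_iff)

lemma sdv_sq: "\<iota> \<in> I \<Longrightarrow> (sdv \<iota>)\<^sup>2 = v (fst \<iota>)"
  unfolding sdv_def using v_pos by (cases \<iota>) (auto simp: I_iff less_imp_le)

lemma init_eq: "mps_init n d \<sigma> D = PiM I (gN sdv)"
  unfolding mps_init_def I_def[symmetric]
  by (intro PiM_cong refl) (auto simp: gN_def sdv_def v_def split: prod.split)

abbreviation "Ms j \<equiv> PiM (Ks j) (gN sdv)"

lemma Mx_meas:
  assumes "i < n" "a < D i" "b < D (mps_nxt n i)"
  shows "(\<lambda>y. Mx d phi z i y a b) \<in> borel_measurable (Ms i)"
  unfolding Mx_def
proof (intro borel_measurable_sum borel_measurable_times borel_measurable_const)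
  fix t assume "t \<in> {..<d i}"
  then have "(i, t, a, b) \<in> Ks i" using assms by (simp add: Ks_iff)
  then show "(\<lambda>y. y (i, t, a, b)) \<in> borel_measurable (Ms i)"
    by (rule measurable_component_singleton[THEN measurable_compose]) (simp add: gN_def)
qed

lemma Mx2_expand:
  "Mx d phi z i y a b * Mx d phi z' i y c e =
   (\<Sum>t1<d i. \<Sum>t2<d i. (phi i (z i) t1 * phi i (z' i) t2) * (y (i,t1,a,b) * y (i,t2,c,e)))"
  unfolding Mx_def sum_product by (intro sum.cong refl) (simp add: mult_ac)

lemma Mx4_expand:
  "Mx d phi z i y a b * Mx d phi z' i y c e * Mx d phi z i y a' b' * Mx d phi z' i y c' e' =
   (\<Sum>t1<d i. \<Sum>t2<d i. \<Sum>t3<d i. \<Sum>t4<d i.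
     (phi i (z i) t1 * phi i (z' i) t2 * phi i (z i) t3 * phi i (z' i) t4) *
     (y (i,t1,a,b) * y (i,t2,c,e) * y (i,t3,a',b') * y (i,t4,c',e')))"
proof -
  have "Mx d phi z i y a b * Mx d phi z' i y c e * Mx d phi z i y a' b' * Mx d phi z' i y c' e' =
    (Mx d phi z i y a b * Mx d phi z' i y c e) * (Mx d phi z i y a' b' * Mx d phi z' i y c' e')"
    by (simp only: mult.assoc)
  also have "\<dots> = (\<Sum>t1<d i. \<Sum>t2<d i. (phi i (z i) t1 * phi i (z' i) t2) * (y (i,t1,a,b) * y (i,t2,c,e))) *
      (\<Sum>t3<d i. \<Sum>t4<d i. (phi i (z i) t3 * phi i (z' i) t4) * (y (i,t3,a',b') * y (i,t4,c',e')))"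
    by (simp only: Mx2_expand)
  also have "\<dots> = (\<Sum>t1<d i. \<Sum>t2<d i. \<Sum>t3<d i. \<Sum>t4<d i.
     ((phi i (z i) t1 * phi i (z' i) t2) * (y (i,t1,a,b) * y (i,t2,c,e))) *
     ((phi i (z i) t3 * phi i (z' i) t4) * (y (i,t3,a',b') * y (i,t4,c',e'))))"
    by (simp only: sum_distrib_right, simp only: sum_distrib_left)
  also have "\<dots> = (\<Sum>t1<d i. \<Sum>t2<d i. \<Sum>t3<d i. \<Sum>t4<d i.
     (phi i (z i) t1 * phi i (z' i) t2 * phi i (z i) t3 * phi i (z' i) t4) *
     (y (i,t1,a,b) * y (i,t2,c,e) * y (i,t3,a',b') * y (i,t4,c',e')))"
    by (intro sum.cong refl) (simp add: mult_ac)
  finally show ?thesis .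
qed

lemma int_sum2:
  fixes f :: "nat \<Rightarrow> nat \<Rightarrow> _ \<Rightarrow> real"
  assumes "\<And>t1 t2. t1 \<in> A \<Longrightarrow> t2 \<in> B \<Longrightarrow> integrable M (f t1 t2)"
  shows "integrable M (\<lambda>y. \<Sum>t1\<in>A. \<Sum>t2\<in>B. c t1 t2 * f t1 t2 y)"
    "integral\<^sup>L M (\<lambda>y. \<Sum>t1\<in>A. \<Sum>t2\<in>B. c t1 t2 * f t1 t2 y) = (\<Sum>t1\<in>A. \<Sum>t2\<in>B. c t1 t2 * integral\<^sup>L M (f t1 t2))"
proof -
  have i1: "integrable M (\<lambda>y. c t1 t2 * f t1 t2 y)" if "t1 \<in> A" "t2 \<in> B" for t1 t2
    using assms[OF that] by auto
  have i2: "integrable M (\<lambda>y. \<Sum>t2\<in>B. c t1 t2 * f t1 t2 y)" if "t1 \<in> A" for t1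
  proof (rule Bochner_Integration.integrable_sum)
    fix t2 assume "t2 \<in> B" then show "integrable M (\<lambda>y. c t1 t2 * f t1 t2 y)" by (rule i1[OF that])
  qed
  show "integrable M (\<lambda>y. \<Sum>t1\<in>A. \<Sum>t2\<in>B. c t1 t2 * f t1 t2 y)"
    by (rule Bochner_Integration.integrable_sum) (rule i2)
  show "integral\<^sup>L M (\<lambda>y. \<Sum>t1\<in>A. \<Sum>t2\<in>B. c t1 t2 * f t1 t2 y) = (\<Sum>t1\<in>A. \<Sum>t2\<in>B. c t1 t2 * integral\<^sup>L M (f t1 t2))"
    using i1 i2 assms by (simp add: integral_sum)
qed

lemma int_sum4:
  fixes f :: "nat \<Rightarrow> nat \<Rightarrow> nat \<Rightarrow> nat \<Rightarrow> _ \<Rightarrow> real"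
  assumes "\<And>t1 t2 t3 t4. t1 \<in> A \<Longrightarrow> t2 \<in> A \<Longrightarrow> t3 \<in> A \<Longrightarrow> t4 \<in> A \<Longrightarrow> integrable M (f t1 t2 t3 t4)"
  shows "integrable M (\<lambda>y. \<Sum>t1\<in>A. \<Sum>t2\<in>A. \<Sum>t3\<in>A. \<Sum>t4\<in>A. c t1 t2 t3 t4 * f t1 t2 t3 t4 y)"
    "integral\<^sup>L M (\<lambda>y. \<Sum>t1\<in>A. \<Sum>t2\<in>A. \<Sum>t3\<in>A. \<Sum>t4\<in>A. c t1 t2 t3 t4 * f t1 t2 t3 t4 y) =
     (\<Sum>t1\<in>A. \<Sum>t2\<in>A. \<Sum>t3\<in>A. \<Sum>t4\<in>A. c t1 t2 t3 t4 * integral\<^sup>L M (f t1 t2 t3 t4))"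
proof -
  have i1: "integrable M (\<lambda>y. c t1 t2 t3 t4 * f t1 t2 t3 t4 y)" if "t1 \<in> A" "t2 \<in> A" "t3 \<in> A" "t4 \<in> A" for t1 t2 t3 t4
    using assms[OF that] by auto
  have i2: "integrable M (\<lambda>y. \<Sum>t4\<in>A. c t1 t2 t3 t4 * f t1 t2 t3 t4 y)" if "t1 \<in> A" "t2 \<in> A" "t3 \<in> A" for t1 t2 t3
  proof (rule Bochner_Integration.integrable_sum)
    fix t4 assume "t4 \<in> A" then show "integrable M (\<lambda>y. c t1 t2 t3 t4 * f t1 t2 t3 t4 y)" by (rule i1[OF that])
  qed
  have i3: "integrable M (\<lambda>y. \<Sum>t3\<in>A. \<Sum>t4\<in>A. c t1 t2 t3 t4 * f t1 t2 t3 t4 y)" if "t1 \<in> A" "t2 \<in> A" for t1 t2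
  proof (rule Bochner_Integration.integrable_sum)
    fix t3 assume "t3 \<in> A" then show "integrable M (\<lambda>y. \<Sum>t4\<in>A. c t1 t2 t3 t4 * f t1 t2 t3 t4 y)" by (rule i2[OF that])
  qed
  have i4: "integrable M (\<lambda>y. \<Sum>t2\<in>A. \<Sum>t3\<in>A. \<Sum>t4\<in>A. c t1 t2 t3 t4 * f t1 t2 t3 t4 y)" if "t1 \<in> A" for t1
  proof (rule Bochner_Integration.integrable_sum)
    fix t2 assume "t2 \<in> A" then show "integrable M (\<lambda>y. \<Sum>t3\<in>A. \<Sum>t4\<in>A. c t1 t2 t3 t4 * f t1 t2 t3 t4 y)" by (rule i3[OF that])
  qed
  show "integrable M (\<lambda>y. \<Sum>t1\<in>A. \<Sum>t2\<in>A. \<Sum>t3\<in>A. \<Sum>t4\<in>A. c t1 t2 t3 t4 * f t1 t2 t3 t4 y)"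
    by (rule Bochner_Integration.integrable_sum) (rule i4)
  show "integral\<^sup>L M (\<lambda>y. \<Sum>t1\<in>A. \<Sum>t2\<in>A. \<Sum>t3\<in>A. \<Sum>t4\<in>A. c t1 t2 t3 t4 * f t1 t2 t3 t4 y) =
     (\<Sum>t1\<in>A. \<Sum>t2\<in>A. \<Sum>t3\<in>A. \<Sum>t4\<in>A. c t1 t2 t3 t4 * integral\<^sup>L M (f t1 t2 t3 t4))"
    using i1 i2 i3 i4 assms by (simp add: integral_sum)
qed

lemma E2:
  assumes i: "i < n" and ac: "a < D i" "c < D i" and be: "b < D (mps_nxt n i)" "e < D (mps_nxt n i)"
  shows "integrable (Ms i) (\<lambda>y. Mx d phi x i y a b * Mx d phi x' i y c e)"
    "integral\<^sup>L (Ms i) (\<lambda>y. Mx d phi x i y a b * Mx d phi x' i y c e) =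
      (if a = c \<and> b = e then v i * \<gamma> i else 0)"
proof -
  have mem: "(i, t, a, b) \<in> Ks i" "(i, t, c, e) \<in> Ks i" if "t < d i" for t
    using that i ac be by (auto simp: Ks_iff)
  have W: "integrable (Ms i) (\<lambda>y. y (i,t1,a,b) * y (i,t2,c,e))"
     "integral\<^sup>L (Ms i) (\<lambda>y. y (i,t1,a,b) * y (i,t2,c,e)) =
       (if t1 = t2 \<and> a = c \<and> b = e then v i else 0)"
    if "t1 < d i" "t2 < d i" for t1 t2
    using wick2[where sd=sdv, OF sdv_pos finite_Ks mem(1)[OF that(1)] mem(2)[OF that(2)]]
      sdv_sq[of "(i,t1,a,b)"] mem(1)[OF that(1)] Ks_sub by auto
  show "integrable (Ms i) (\<lambda>y. Mx d phi x i y a b * Mx d phi x' i y c e)"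
    unfolding Mx2_expand by (rule int_sum2(1)) (auto intro: W)
  have "integral\<^sup>L (Ms i) (\<lambda>y. Mx d phi x i y a b * Mx d phi x' i y c e) =
     (\<Sum>t1<d i. \<Sum>t2<d i. (phi i (x i) t1 * phi i (x' i) t2) *
        integral\<^sup>L (Ms i) (\<lambda>y. y (i,t1,a,b) * y (i,t2,c,e)))"
    unfolding Mx2_expand by (rule int_sum2(2)) (auto intro: W)
  also have "\<dots> = (\<Sum>t1<d i. \<Sum>t2<d i. phi i (x i) t1 * phi i (x' i) t2 * (if t1 = t2 then 1 else 0)) *
       (if a = c \<and> b = e then v i else 0)"
  proof -
    have "(\<Sum>t1<d i. \<Sum>t2<d i. (phi i (x i) t1 * phi i (x' i) t2) *
        integral\<^sup>L (Ms i) (\<lambda>y. y (i,t1,a,b) * y (i,t2,c,e))) =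
      (\<Sum>t1<d i. \<Sum>t2<d i. phi i (x i) t1 * phi i (x' i) t2 * (if t1 = t2 then 1 else 0) *
       (if a = c \<and> b = e then v i else 0))"
      by (intro sum.cong refl) (simp add: W)
    then show ?thesis by (simp only: sum_distrib_right)
  qed
  also have "\<dots> = (if a = c \<and> b = e then v i * \<gamma> i else 0)"
    by (simp add: sum_delta_pair \<gamma>_def feat_dot_def)
  finally show "integral\<^sup>L (Ms i) (\<lambda>y. Mx d phi x i y a b * Mx d phi x' i y c e) =
      (if a = c \<and> b = e then v i * \<gamma> i else 0)" .
qed

end


context mps_set begin

lemma mult_if0: "(c::real) * (if P then w else 0) = (if P then w * c else 0)" by simp

lemma E4:
  assumes i: "i < n" and ac: "a < D i" "c < D i" "a' < D i" "c' < D i"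
    and be: "b < D (mps_nxt n i)" "e < D (mps_nxt n i)" "b' < D (mps_nxt n i)" "e' < D (mps_nxt n i)"
  shows "integrable (Ms i) (\<lambda>y. Mx d phi x i y a b * Mx d phi x' i y c e * Mx d phi x i y a' b' * Mx d phi x' i y c' e')"
    "integral\<^sup>L (Ms i) (\<lambda>y. Mx d phi x i y a b * Mx d phi x' i y c e * Mx d phi x i y a' b' * Mx d phi x' i y c' e') =
      (if a = c \<and> b = e \<and> a' = c' \<and> b' = e' then (v i)\<^sup>2 * (\<gamma> i)\<^sup>2 else 0) +
      (if a = a' \<and> b = b' \<and> c = c' \<and> e = e' then (v i)\<^sup>2 * (\<alpha> i * \<beta> i) else 0) +
      (if a = c' \<and> b = e' \<and> c = a' \<and> e = b' then (v i)\<^sup>2 * (\<gamma> i)\<^sup>2 else 0)"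
proof -
  have mem: "(i, t, a, b) \<in> Ks i" "(i, t, c, e) \<in> Ks i" "(i, t, a', b') \<in> Ks i" "(i, t, c', e') \<in> Ks i"
    if "t < d i" for t
    using that i ac be by (auto simp: Ks_iff)
  define K1 where "K1 = (if a = c \<and> b = e \<and> a' = c' \<and> b' = e' then (v i)\<^sup>2 else 0)"
  define K2 where "K2 = (if a = a' \<and> b = b' \<and> c = c' \<and> e = e' then (v i)\<^sup>2 else 0)"
  define K3 where "K3 = (if a = c' \<and> b = e' \<and> c = a' \<and> e = b' then (v i)\<^sup>2 else 0)"
  have sq: "(sdv (i, t, a0, b0))\<^sup>2 = v i" if "(i, t, a0, b0) \<in> Ks i" for t a0 b0
    using sdv_sq[of "(i,t,a0,b0)"] that Ks_sub by auto
  have W: "integrable (Ms i) (\<lambda>y. y (i,t1,a,b) * y (i,t2,c,e) * y (i,t3,a',b') * y (i,t4,c',e'))"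
     "integral\<^sup>L (Ms i) (\<lambda>y. y (i,t1,a,b) * y (i,t2,c,e) * y (i,t3,a',b') * y (i,t4,c',e')) =
       (if t1 = t2 \<and> t3 = t4 then 1 else 0) * K1 + (if t1 = t3 \<and> t2 = t4 then 1 else 0) * K2 +
       (if t1 = t4 \<and> t2 = t3 then 1 else 0) * K3"
    if "t1 < d i" "t2 < d i" "t3 < d i" "t4 < d i" for t1 t2 t3 t4
  proof -
    note w = wick4[where sd=sdv, OF sdv_pos finite_Ks mem(1)[OF that(1)] mem(2)[OF that(2)]
        mem(3)[OF that(3)] mem(4)[OF that(4)]]
    show "integrable (Ms i) (\<lambda>y. y (i,t1,a,b) * y (i,t2,c,e) * y (i,t3,a',b') * y (i,t4,c',e'))"
      by (rule w(1))
    show "integral\<^sup>L (Ms i) (\<lambda>y. y (i,t1,a,b) * y (i,t2,c,e) * y (i,t3,a',b') * y (i,t4,c',e')) =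
       (if t1 = t2 \<and> t3 = t4 then 1 else 0) * K1 + (if t1 = t3 \<and> t2 = t4 then 1 else 0) * K2 +
       (if t1 = t4 \<and> t2 = t3 then 1 else 0) * K3"
    proof -
      note s1 = sq[OF mem(1)[OF that(1)]] and s2 = sq[OF mem(2)[OF that(2)]] and s3 = sq[OF mem(3)[OF that(3)]]
      have e1: "(if (i,t1,a,b) = (i,t2,c,e) \<and> (i,t3,a',b') = (i,t4,c',e') then v i * v i else 0) =
          (if t1 = t2 \<and> t3 = t4 then 1 else 0) * K1"
        unfolding K1_def by (auto simp: power2_eq_square)
      have e2: "(if (i,t1,a,b) = (i,t3,a',b') \<and> (i,t2,c,e) = (i,t4,c',e') then v i * v i else 0) =
          (if t1 = t3 \<and> t2 = t4 then 1 else 0) * K2"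
        unfolding K2_def by (auto simp: power2_eq_square)
      have e3: "(if (i,t1,a,b) = (i,t4,c',e') \<and> (i,t2,c,e) = (i,t3,a',b') then v i * v i else 0) =
          (if t1 = t4 \<and> t2 = t3 then 1 else 0) * K3"
        unfolding K3_def by (auto simp: power2_eq_square)
      show ?thesis unfolding w(2) s1 s2 s3 e1 e2 e3 ..
    qed
  qed
  show "integrable (Ms i) (\<lambda>y. Mx d phi x i y a b * Mx d phi x' i y c e * Mx d phi x i y a' b' * Mx d phi x' i y c' e')"
    unfolding Mx4_expand by (rule int_sum4(1)) (auto intro: W)
  have "integral\<^sup>L (Ms i) (\<lambda>y. Mx d phi x i y a b * Mx d phi x' i y c e * Mx d phi x i y a' b' * Mx d phi x' i y c' e') =
     (\<Sum>t1<d i. \<Sum>t2<d i. \<Sum>t3<d i. \<Sum>t4<d i. (phi i (x i) t1 * phi i (x' i) t2 * phi i (x i) t3 * phi i (x' i) t4) *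
        integral\<^sup>L (Ms i) (\<lambda>y. y (i,t1,a,b) * y (i,t2,c,e) * y (i,t3,a',b') * y (i,t4,c',e')))"
    unfolding Mx4_expand by (rule int_sum4(2)) (auto intro: W)
  also have "\<dots> = (\<Sum>t1<d i. \<Sum>t2<d i. \<Sum>t3<d i. \<Sum>t4<d i.
       phi i (x i) t1 * phi i (x' i) t2 * phi i (x i) t3 * phi i (x' i) t4 * (if t1 = t2 \<and> t3 = t4 then 1 else 0) * K1 +
       phi i (x i) t1 * phi i (x' i) t2 * phi i (x i) t3 * phi i (x' i) t4 * (if t1 = t3 \<and> t2 = t4 then 1 else 0) * K2 +
       phi i (x i) t1 * phi i (x' i) t2 * phi i (x i) t3 * phi i (x' i) t4 * (if t1 = t4 \<and> t2 = t3 then 1 else 0) * K3)"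
  proof (intro sum.cong refl)
    fix t1 t2 t3 t4 assume t: "t1 \<in> {..<d i}" "t2 \<in> {..<d i}" "t3 \<in> {..<d i}" "t4 \<in> {..<d i}"
    show "(phi i (x i) t1 * phi i (x' i) t2 * phi i (x i) t3 * phi i (x' i) t4) *
        integral\<^sup>L (Ms i) (\<lambda>y. y (i,t1,a,b) * y (i,t2,c,e) * y (i,t3,a',b') * y (i,t4,c',e')) =
       phi i (x i) t1 * phi i (x' i) t2 * phi i (x i) t3 * phi i (x' i) t4 * (if t1 = t2 \<and> t3 = t4 then 1 else 0) * K1 +
       phi i (x i) t1 * phi i (x' i) t2 * phi i (x i) t3 * phi i (x' i) t4 * (if t1 = t3 \<and> t2 = t4 then 1 else 0) * K2 +
       phi i (x i) t1 * phi i (x' i) t2 * phi i (x i) t3 * phi i (x' i) t4 * (if t1 = t4 \<and> t2 = t3 then 1 else 0) * K3"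
      unfolding W(2)[OF t[unfolded lessThan_iff]] by (simp only: distrib_left mult.assoc)
  qed
  also have "\<dots> =
     (\<Sum>t1<d i. \<Sum>t2<d i. \<Sum>t3<d i. \<Sum>t4<d i.
       phi i (x i) t1 * phi i (x' i) t2 * phi i (x i) t3 * phi i (x' i) t4 * (if t1 = t2 \<and> t3 = t4 then 1 else 0)) * K1 +
     (\<Sum>t1<d i. \<Sum>t2<d i. \<Sum>t3<d i. \<Sum>t4<d i.
       phi i (x i) t1 * phi i (x' i) t2 * phi i (x i) t3 * phi i (x' i) t4 * (if t1 = t3 \<and> t2 = t4 then 1 else 0)) * K2 +
     (\<Sum>t1<d i. \<Sum>t2<d i. \<Sum>t3<d i. \<Sum>t4<d i.
       phi i (x i) t1 * phi i (x' i) t2 * phi i (x i) t3 * phi i (x' i) t4 * (if t1 = t4 \<and> t2 = t3 then 1 else 0)) * K3"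
    by (simp only: sum.distrib sum_distrib_right)
  also have "\<dots> = (\<gamma> i * \<gamma> i) * K1 + (\<alpha> i * \<beta> i) * K2 + (\<gamma> i * \<gamma> i) * K3"
    unfolding L12 L13 L14 \<alpha>_def \<beta>_def \<gamma>_def feat_dot_def by (simp add: mult.commute)
  also have "\<dots> = (if a = c \<and> b = e \<and> a' = c' \<and> b' = e' then (v i)\<^sup>2 * (\<gamma> i)\<^sup>2 else 0) +
      (if a = a' \<and> b = b' \<and> c = c' \<and> e = e' then (v i)\<^sup>2 * (\<alpha> i * \<beta> i) else 0) +
      (if a = c' \<and> b = e' \<and> c = a' \<and> e = b' then (v i)\<^sup>2 * (\<gamma> i)\<^sup>2 else 0)"
    unfolding K1_def K2_def K3_def mult_if0 by (simp only: power2_eq_square)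
  finally show "integral\<^sup>L (Ms i) (\<lambda>y. Mx d phi x i y a b * Mx d phi x' i y c e * Mx d phi x i y a' b' * Mx d phi x' i y c' e') =
      (if a = c \<and> b = e \<and> a' = c' \<and> b' = e' then (v i)\<^sup>2 * (\<gamma> i)\<^sup>2 else 0) +
      (if a = a' \<and> b = b' \<and> c = c' \<and> e = e' then (v i)\<^sup>2 * (\<alpha> i * \<beta> i) else 0) +
      (if a = c' \<and> b = e' \<and> c = a' \<and> e = b' then (v i)\<^sup>2 * (\<gamma> i)\<^sup>2 else 0)" .
qed

end


definition V4 :: "(nat \<Rightarrow> nat) \<Rightarrow> nat \<Rightarrow> ((nat \<times> nat) \<times> (nat \<times> nat)) set" where
  "V4 D i = V2 D i \<times> V2 D i"

definition Wp :: "nat \<Rightarrow> (nat \<times> nat) \<times> (nat \<times> nat) \<Rightarrow> real" where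
  "Wp \<pi> p = (case p of ((a, c), (a', c')) \<Rightarrow>
     if \<pi> = 0 then (if a = c \<and> a' = c' then 1 else 0)
     else if \<pi> = 1 then (if a = a' \<and> c = c' then 1 else 0)
     else (if a = c' \<and> c = a' then 1 else 0))"

lemma sum_times: "(\<Sum>p\<in>A\<times>B. f p) = (\<Sum>a\<in>A. \<Sum>b\<in>B. f (a,b))"
  by (simp add: sum.cartesian_product)

lemma sum_V2_w0: "(\<Sum>p\<in>V2 D j. w0 p * w0 p) = real (D j)"
proof -
  have e: "\<And>a c. (if a = c then 1 else 0) * (if a = c then 1 else (0::real)) = (if c = a then 1 else 0)" by auto
  have "(\<Sum>p\<in>V2 D j. w0 p * w0 p) = (\<Sum>a<D j. \<Sum>c<D j. (if a = c then 1 else 0) * (if a = c then 1 else (0::real)))"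
    unfolding V2_def sum_times by (simp add: w0_def)
  also have "\<dots> = real (D j)" unfolding e by (simp add: sum.delta)
  finally show ?thesis .
qed

lemma mult_ind: "(r::real) * (if P then 1 else 0) = (if P then r else 0)" by simp

lemma Wprod:
  assumes "\<pi> \<in> {0,1,2}" "\<rho> \<in> {0,1,2}"
  shows "Wp \<pi> ((a,c),(a',c')) * Wp \<rho> ((a,c),(a',c')) =
    (if \<pi> = \<rho> then (if \<pi> = 0 then (if c' = a' then (if c = a then 1 else 0) else 0)
       else if \<pi> = 1 then (if c' = c then (if a' = a then 1 else 0) else 0)
       else (if c' = a then (if a' = c then 1 else 0) else 0))
     else (if c' = a' then (if a' = a then (if c = a then 1 else 0) else 0) else 0))"
  using assms by (auto simp: Wp_def)

lemma sum_V4_W: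
  assumes "\<pi> \<in> {0,1,2}" "\<rho> \<in> {0,1,2}"
  shows "(\<Sum>p\<in>V4 D j. Wp \<pi> p * Wp \<rho> p) = (if \<pi> = \<rho> then real (D j) ^ 2 else real (D j))"
proof -
  have eq: "(\<Sum>p\<in>V4 D j. Wp \<pi> p * Wp \<rho> p) =
     (\<Sum>a<D j. \<Sum>c<D j. \<Sum>a'<D j. \<Sum>c'<D j. Wp \<pi> ((a,c),(a',c')) * Wp \<rho> ((a,c),(a',c')))"
    unfolding V4_def V2_def sum_times by simp
  show ?thesis unfolding eq Wprod[OF assms]
  proof (cases "\<pi> = \<rho>")
    case True
    then show "(\<Sum>a<D j. \<Sum>c<D j. \<Sum>a'<D j. \<Sum>c'<D j. if \<pi> = \<rho> then (if \<pi> = 0 then (if c' = a' then (if c = a then 1 else 0) else 0)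
       else if \<pi> = 1 then (if c' = c then (if a' = a then 1 else 0) else 0)
       else (if c' = a then (if a' = c then 1 else 0) else 0))
     else (if c' = a' then (if a' = a then (if c = a then 1 else 0) else 0) else 0)) =
     (if \<pi> = \<rho> then real (D j) ^ 2 else real (D j))"
      using assms by (auto simp: sum.delta power2_eq_square mult_ind)
  next
    case False
    then show "(\<Sum>a<D j. \<Sum>c<D j. \<Sum>a'<D j. \<Sum>c'<D j. if \<pi> = \<rho> then (if \<pi> = 0 then (if c' = a' then (if c = a then 1 else 0) else 0)
       else if \<pi> = 1 then (if c' = c then (if a' = a then 1 else 0) else 0)
       else (if c' = a then (if a' = c then 1 else 0) else 0))
     else (if c' = a' then (if a' = a then (if c = a then 1 else 0) else 0) else 0)) =
     (if \<pi> = \<rho> then real (D j) ^ 2 else real (D j))"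
      by (simp add: sum.delta)
  qed
qed

context mps_set begin

definition "cc k m i (\<pi>::nat) = (if \<pi> = 0 then (if i = k then 1 else v i * \<gamma> i) * (if i = m then 1 else v i * \<gamma> i)
   else if \<pi> = 1 then (if i \<noteq> k \<and> i \<noteq> m then (v i)\<^sup>2 * (\<alpha> i * \<beta> i) else 0)
   else (if i \<noteq> k \<and> i \<noteq> m then (v i)\<^sup>2 * (\<gamma> i)\<^sup>2 else 0))"

definition "Gk k m i y p q = Fk d phi x x' k i y (fst p) (fst q) * Fk d phi x x' m i y (snd p) (snd q)"

lemma Fk_meas:
  assumes "i < n" "p \<in> V2 D i" "q \<in> V2 D (mps_nxt n i)"
  shows "(\<lambda>y. Fk d phi x x' k i y p q) \<in> borel_measurable (Ms i)"
proof (cases "i = k")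
  case True then show ?thesis by (simp add: Fk_def)
next
  case False
  then show ?thesis using assms unfolding Fk_def V2_def
    by (cases p, cases q) (auto intro!: borel_measurable_times Mx_meas)
qed

lemma S2:
  assumes i: "i < n" and p: "p \<in> V2 D i" and q: "q \<in> V2 D (mps_nxt n i)"
  shows "integrable (Ms i) (\<lambda>y. Fk d phi x x' k i y p q)"
    "integral\<^sup>L (Ms i) (\<lambda>y. Fk d phi x x' k i y p q) = (if i = k then 1 else v i * \<gamma> i) * w0 p * w0 q"
proof -
  interpret prob_space "Ms i" by (rule prob_space_PiM) (simp add: prob_gN sdv_pos)
  obtain a c where pc: "p = (a, c)" by (cases p)
  obtain b e where qc: "q = (b, e)" by (cases q)
  have bnd: "a < D i" "c < D i" "b < D (mps_nxt n i)" "e < D (mps_nxt n i)"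
    using p q by (auto simp: pc qc V2_def)
  show "integrable (Ms i) (\<lambda>y. Fk d phi x x' k i y p q)"
  proof (cases "i = k")
    case True
    have "integrable (Ms i) (\<lambda>y. w0 p * w0 q)" by (rule finite_measure.integrable_const) unfold_locales
    then show ?thesis using True by (simp add: Fk_def)
  next
    case False then show ?thesis using E2(1)[OF i bnd(1,2) bnd(3,4)] by (simp add: Fk_def pc qc)
  qed
  show "integral\<^sup>L (Ms i) (\<lambda>y. Fk d phi x x' k i y p q) = (if i = k then 1 else v i * \<gamma> i) * w0 p * w0 q"
  proof (cases "i = k")
    case True
    have "integral\<^sup>L (Ms i) (\<lambda>y. w0 p * w0 q) = w0 p * w0 q" by (simp add: prob_space)
    then show ?thesis using True by (simp add: Fk_def)
  next
    case False
    then show ?thesis using E2(2)[OF i bnd(1,2) bnd(3,4)] by (simp add: Fk_def pc qc w0_def)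
  qed
qed

lemma Gk_meas:
  assumes "i < n" "p \<in> V4 D i" "q \<in> V4 D (mps_nxt n i)"
  shows "(\<lambda>y. Gk k m i y p q) \<in> borel_measurable (Ms i)"
  unfolding Gk_def using assms
  by (intro borel_measurable_times Fk_meas) (auto simp: V4_def mem_Times_iff)

lemma sum012: "(\<Sum>\<pi>\<in>{0::nat,1,2}. f \<pi>) = f 0 + f 1 + f 2" by (simp add: add.assoc)

lemma S4:
  assumes i: "i < n" and p: "p \<in> V4 D i" and q: "q \<in> V4 D (mps_nxt n i)"
  shows "integrable (Ms i) (\<lambda>y. Gk k m i y p q)"
    "integral\<^sup>L (Ms i) (\<lambda>y. Gk k m i y p q) = (\<Sum>\<pi>\<in>{0,1,2}. cc k m i \<pi> * Wp \<pi> p * Wp \<pi> q)"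
proof -
  interpret prob_space "Ms i" by (rule prob_space_PiM) (simp add: prob_gN sdv_pos)
  obtain a c a' c' where pc: "p = ((a, c), (a', c'))" by (metis prod.collapse)
  obtain b e b' e' where qc: "q = ((b, e), (b', e'))" by (metis prod.collapse)
  have bnd: "a < D i" "c < D i" "a' < D i" "c' < D i"
    "b < D (mps_nxt n i)" "e < D (mps_nxt n i)" "b' < D (mps_nxt n i)" "e' < D (mps_nxt n i)"
    using p q by (auto simp: pc qc V4_def V2_def)
  have cst: "integrable (Ms i) (\<lambda>y. z)" for z :: real by (rule finite_measure.integrable_const) unfold_locales
  have ci: "integral\<^sup>L (Ms i) (\<lambda>y. z) = z" for z :: real by (simp add: prob_space)
  have "integrable (Ms i) (\<lambda>y. Gk k m i y p q) \<and>
    integral\<^sup>L (Ms i) (\<lambda>y. Gk k m i y p q) = (\<Sum>\<pi>\<in>{0,1,2}. cc k m i \<pi> * Wp \<pi> p * Wp \<pi> q)"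
  proof (cases "i = k"; cases "i = m")
    assume ik: "i = k" and im: "i = m"
    have G: "(\<lambda>y. Gk k m i y p q) = (\<lambda>y. w0 (a,c) * w0 (b,e) * (w0 (a',c') * w0 (b',e')))"
      using ik im by (simp add: Gk_def Fk_def pc qc)
    have cc: "cc k m i 0 = 1" "cc k m i 1 = 0" "cc k m i 2 = 0" using ik im by (simp_all add: cc_def)
    show ?thesis unfolding G sum012 cc ci
      by (simp add: cst Wp_def w0_def pc qc)
  next
    assume ik: "i = k" and im: "i \<noteq> m"
    have G: "(\<lambda>y. Gk k m i y p q) = (\<lambda>y. w0 (a,c) * w0 (b,e) * (Mx d phi x i y a' b' * Mx d phi x' i y c' e'))"
      using ik im by (simp add: Gk_def Fk_def pc qc)
    note E = E2[OF i bnd(3,4) bnd(7,8)]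
    have cc: "cc k m i 0 = v i * \<gamma> i" "cc k m i 1 = 0" "cc k m i 2 = 0" using ik im by (simp_all add: cc_def)
    show ?thesis unfolding G sum012 cc using E
      by (simp add: Wp_def w0_def pc qc)
  next
    assume ik: "i \<noteq> k" and im: "i = m"
    have G: "(\<lambda>y. Gk k m i y p q) = (\<lambda>y. (Mx d phi x i y a b * Mx d phi x' i y c e) * (w0 (a',c') * w0 (b',e')))"
      using ik im by (simp add: Gk_def Fk_def pc qc)
    note E = E2[OF i bnd(1,2) bnd(5,6)]
    have cc: "cc k m i 0 = v i * \<gamma> i" "cc k m i 1 = 0" "cc k m i 2 = 0" using ik im by (simp_all add: cc_def)
    show ?thesis unfolding G sum012 cc using E
      by (simp add: Wp_def w0_def pc qc)
  next
    assume ik: "i \<noteq> k" and im: "i \<noteq> m"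
    have G: "(\<lambda>y. Gk k m i y p q) = (\<lambda>y. Mx d phi x i y a b * Mx d phi x' i y c e * Mx d phi x i y a' b' * Mx d phi x' i y c' e')"
      using ik im by (simp add: Gk_def Fk_def pc qc mult.assoc)
    note E = E4[OF i bnd(1-4) bnd(5-8)]
    have t0: "cc k m i 0 * Wp 0 p * Wp 0 q = (if a = c \<and> b = e \<and> a' = c' \<and> b' = e' then (v i)\<^sup>2 * (\<gamma> i)\<^sup>2 else 0)"
      using ik im by (simp add: cc_def Wp_def pc qc power2_eq_square)
    have t1: "cc k m i 1 * Wp 1 p * Wp 1 q = (if a = a' \<and> b = b' \<and> c = c' \<and> e = e' then (v i)\<^sup>2 * (\<alpha> i * \<beta> i) else 0)"
      using ik im by (simp add: cc_def Wp_def pc qc)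
    have t2: "cc k m i 2 * Wp 2 p * Wp 2 q = (if a = c' \<and> b = e' \<and> c = a' \<and> e = b' then (v i)\<^sup>2 * (\<gamma> i)\<^sup>2 else 0)"
      using ik im by (simp add: cc_def Wp_def pc qc)
    show ?thesis unfolding G sum012 t0 t1 t2 using E by simp
  qed
  then show "integrable (Ms i) (\<lambda>y. Gk k m i y p q)"
    "integral\<^sup>L (Ms i) (\<lambda>y. Gk k m i y p q) = (\<Sum>\<pi>\<in>{0,1,2}. cc k m i \<pi> * Wp \<pi> p * Wp \<pi> q)" by auto
qed

end


context mps_set begin

abbreviation "\<mu> \<equiv> PiM I (gN sdv)"

lemma Mx_restrict:
  assumes "i < n" "a < D i" "b < D (mps_nxt n i)"
  shows "Mx d phi z i (restrict A (Ks i)) a b = Mx d phi z i A a b"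
  unfolding Mx_def using assms by (intro sum.cong refl) (simp add: Ks_iff)

lemma Fk_restrict:
  assumes "i < n" "p \<in> V2 D i" "q \<in> V2 D (mps_nxt n i)"
  shows "Fk d phi x x' k i (restrict A (Ks i)) p q = Fk d phi x x' k i A p q"
  using assms unfolding Fk_def V2_def by (cases p, cases q) (simp add: Mx_restrict)

lemma Gk_restrict:
  assumes "i < n" "p \<in> V4 D i" "q \<in> V4 D (mps_nxt n i)"
  shows "Gk k m i (restrict A (Ks i)) p q = Gk k m i A p q"
  using assms unfolding Gk_def V4_def by (auto simp: Fk_restrict mem_Times_iff)

lemma PiE_mem: "u \<in> PiE {..<n} V \<Longrightarrow> j < n \<Longrightarrow> u j \<in> V j \<and> u (mps_nxt n j) \<in> V (mps_nxt n j)"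
  using nxt_lt[of j n] by (auto simp: PiE_iff)

lemma fin_V2: "finite (V2 D i)" by (simp add: V2_def)
lemma fin_V4: "finite (V4 D i)" by (simp add: V4_def V2_def)

lemma site_prod:
  fixes g :: "nat \<Rightarrow> (nat \<times> nat \<times> nat \<times> nat \<Rightarrow> real) \<Rightarrow> real"
  assumes gm: "\<And>j. j < n \<Longrightarrow> g j \<in> borel_measurable (Ms j)"
    and gi: "\<And>j. j < n \<Longrightarrow> integrable (Ms j) (g j)"
  shows "integrable \<mu> (\<lambda>A. \<Prod>j<n. g j (restrict A (Ks j)))"
    "integral\<^sup>L \<mu> (\<lambda>A. \<Prod>j<n. g j (restrict A (Ks j))) = (\<Prod>j<n. integral\<^sup>L (Ms j) (g j))"
proof -
  have "0 \<in> {..<n}" using n1 by simp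
  then have L: "finite {..<n}" "{..<n} \<noteq> {}" by auto
  note si = site_indep[where sd=sdv and I=I and L="{..<n}" and K=Ks and g=g, OF sdv_pos finite_I L Ks_sub Ks_disj]
  show "integrable \<mu> (\<lambda>A. \<Prod>j<n. g j (restrict A (Ks j)))" using si gm gi by auto
  show "integral\<^sup>L \<mu> (\<lambda>A. \<Prod>j<n. g j (restrict A (Ks j))) = (\<Prod>j<n. integral\<^sup>L (Ms j) (g j))"
    using si gm gi by auto
qed

definition "c1 k i = (if i = k then 1 else v i * \<gamma> i)"

lemma ET:
  assumes k: "k < n"
  shows "integrable \<mu> (Tk n d phi D x x' k)"
    "integral\<^sup>L \<mu> (Tk n d phi D x x' k) = (\<Prod>i<n. c1 k i) * (\<Prod>j<n. real (D j))"
proof -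
  define g where "g u j y = Fk d phi x x' k j y (u j) (u (mps_nxt n j))" for u j y
  have T: "Tk n d phi D x x' k = (\<lambda>A. \<Sum>u\<in>PiE {..<n} (V2 D). \<Prod>j<n. g u j (restrict A (Ks j)))"
    unfolding Tk_def g_def
    by (intro ext sum.cong refl prod.cong) (auto simp: Fk_restrict PiE_mem)
  have each: "integrable \<mu> (\<lambda>A. \<Prod>j<n. g u j (restrict A (Ks j)))"
     "integral\<^sup>L \<mu> (\<lambda>A. \<Prod>j<n. g u j (restrict A (Ks j))) = (\<Prod>j<n. c1 k j * w0 (u j) * w0 (u (mps_nxt n j)))"
    if u: "u \<in> PiE {..<n} (V2 D)" for u
  proof -
    have gm: "g u j \<in> borel_measurable (Ms j)" and gi: "integrable (Ms j) (g u j)"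
      and gv: "integral\<^sup>L (Ms j) (g u j) = c1 k j * w0 (u j) * w0 (u (mps_nxt n j))" if "j < n" for j
      using Fk_meas[OF that PiE_mem[OF u that, THEN conjunct1] PiE_mem[OF u that, THEN conjunct2]]
        S2[OF that PiE_mem[OF u that, THEN conjunct1] PiE_mem[OF u that, THEN conjunct2]]
      unfolding g_def c1_def by auto
    show "integrable \<mu> (\<lambda>A. \<Prod>j<n. g u j (restrict A (Ks j)))" by (rule site_prod(1)[OF gm gi])
    show "integral\<^sup>L \<mu> (\<lambda>A. \<Prod>j<n. g u j (restrict A (Ks j))) = (\<Prod>j<n. c1 k j * w0 (u j) * w0 (u (mps_nxt n j)))"
      using site_prod(2)[OF gm gi] gv by simp
  qed
  show "integrable \<mu> (Tk n d phi D x x' k)"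
    unfolding T by (rule Bochner_Integration.integrable_sum) (rule each(1))
  have "integral\<^sup>L \<mu> (Tk n d phi D x x' k) = (\<Sum>u\<in>PiE {..<n} (V2 D). integral\<^sup>L \<mu> (\<lambda>A. \<Prod>j<n. g u j (restrict A (Ks j))))"
    unfolding T by (rule Bochner_Integration.integral_sum) (rule each(1))
  also have "\<dots> = (\<Sum>u\<in>PiE {..<n} (V2 D). \<Prod>j<n. c1 k j * w0 (u j) * w0 (u (mps_nxt n j)))"
    by (intro sum.cong refl) (rule each(2))
  also have "\<dots> = (\<Sum>\<pi>\<in>PiE {..<n} (\<lambda>_. {0::nat}). (\<Prod>i<n. c1 k i) * (\<Prod>j<n. \<Sum>v\<in>V2 D j. w0 v * w0 v))"
    by (rule cyc_sum[where c="\<lambda>i \<pi>. c1 k i" and w="\<lambda>\<pi>. w0"]) (auto simp: fin_V2)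
  also have "\<dots> = (\<Prod>i<n. c1 k i) * (\<Prod>j<n. real (D j))"
    by (simp add: sum_V2_w0 card_PiE)
  finally show "integral\<^sup>L \<mu> (Tk n d phi D x x' k) = (\<Prod>i<n. c1 k i) * (\<Prod>j<n. real (D j))" .
qed

lemma TT_site:
  "Tk n d phi D x x' k A * Tk n d phi D x x' m A =
   (\<Sum>z\<in>PiE {..<n} (V4 D). \<Prod>j<n. Gk k m j A (z j) (z (mps_nxt n j)))"
proof -
  have "Tk n d phi D x x' k A * Tk n d phi D x x' m A =
    (\<Sum>u\<in>PiE {..<n} (V2 D). \<Sum>u'\<in>PiE {..<n} (V2 D).
       (\<Prod>i<n. Fk d phi x x' k i A (u i) (u (mps_nxt n i))) * (\<Prod>i<n. Fk d phi x x' m i A (u' i) (u' (mps_nxt n i))))"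
    unfolding Tk_def by (rule sum_product)
  also have "\<dots> = (\<Sum>z\<in>PiE {..<n} (\<lambda>i. V2 D i \<times> V2 D i).
       (\<Prod>i<n. Fk d phi x x' k i A ((\<lambda>i\<in>{..<n}. fst (z i)) i) ((\<lambda>i\<in>{..<n}. fst (z i)) (mps_nxt n i))) *
       (\<Prod>i<n. Fk d phi x x' m i A ((\<lambda>i\<in>{..<n}. snd (z i)) i) ((\<lambda>i\<in>{..<n}. snd (z i)) (mps_nxt n i))))"
    by (rule sum_PiE_pair) (auto simp: fin_V2)
  also have "\<dots> = (\<Sum>z\<in>PiE {..<n} (V4 D). \<Prod>j<n. Gk k m j A (z j) (z (mps_nxt n j)))"
    unfolding V4_def[symmetric] Gk_def prod.distrib[symmetric]
    by (intro sum.cong refl prod.cong) (simp add: nxt_lt)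
  finally show ?thesis .
qed

lemma ETT:
  assumes k: "k < n" and m: "m < n"
  shows "integrable \<mu> (\<lambda>A. Tk n d phi D x x' k A * Tk n d phi D x x' m A)"
    "integral\<^sup>L \<mu> (\<lambda>A. Tk n d phi D x x' k A * Tk n d phi D x x' m A) =
      (\<Sum>\<pi>\<in>PiE {..<n} (\<lambda>_. {0::nat,1,2}). (\<Prod>i<n. cc k m i (\<pi> i)) *
          (\<Prod>j<n. if \<pi> j = \<pi> (prv n j) then real (D j) ^ 2 else real (D j)))"
proof -
  define g where "g z j y = Gk k m j y (z j) (z (mps_nxt n j))" for z j y
  have T: "(\<lambda>A. Tk n d phi D x x' k A * Tk n d phi D x x' m A) =
      (\<lambda>A. \<Sum>z\<in>PiE {..<n} (V4 D). \<Prod>j<n. g z j (restrict A (Ks j)))"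
    unfolding TT_site g_def
    by (intro ext sum.cong refl prod.cong) (auto simp: Gk_restrict PiE_mem)
  have each: "integrable \<mu> (\<lambda>A. \<Prod>j<n. g z j (restrict A (Ks j)))"
     "integral\<^sup>L \<mu> (\<lambda>A. \<Prod>j<n. g z j (restrict A (Ks j))) =
       (\<Prod>j<n. \<Sum>\<pi>\<in>{0,1,2}. cc k m j \<pi> * Wp \<pi> (z j) * Wp \<pi> (z (mps_nxt n j)))"
    if z: "z \<in> PiE {..<n} (V4 D)" for z
  proof -
    have gm: "g z j \<in> borel_measurable (Ms j)" and gi: "integrable (Ms j) (g z j)"
      and gv: "integral\<^sup>L (Ms j) (g z j) = (\<Sum>\<pi>\<in>{0,1,2}. cc k m j \<pi> * Wp \<pi> (z j) * Wp \<pi> (z (mps_nxt n j)))"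
      if "j < n" for j
      using Gk_meas[OF that PiE_mem[OF z that, THEN conjunct1] PiE_mem[OF z that, THEN conjunct2]]
        S4[OF that PiE_mem[OF z that, THEN conjunct1] PiE_mem[OF z that, THEN conjunct2]]
      unfolding g_def by auto
    show "integrable \<mu> (\<lambda>A. \<Prod>j<n. g z j (restrict A (Ks j)))" by (rule site_prod(1)[OF gm gi])
    show "integral\<^sup>L \<mu> (\<lambda>A. \<Prod>j<n. g z j (restrict A (Ks j))) =
       (\<Prod>j<n. \<Sum>\<pi>\<in>{0,1,2}. cc k m j \<pi> * Wp \<pi> (z j) * Wp \<pi> (z (mps_nxt n j)))"
      using site_prod(2)[OF gm gi] gv by simp
  qed
  show "integrable \<mu> (\<lambda>A. Tk n d phi D x x' k A * Tk n d phi D x x' m A)"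
    unfolding T by (rule Bochner_Integration.integrable_sum) (rule each(1))
  have "integral\<^sup>L \<mu> (\<lambda>A. Tk n d phi D x x' k A * Tk n d phi D x x' m A) =
      (\<Sum>z\<in>PiE {..<n} (V4 D). integral\<^sup>L \<mu> (\<lambda>A. \<Prod>j<n. g z j (restrict A (Ks j))))"
    unfolding T by (rule Bochner_Integration.integral_sum) (rule each(1))
  also have "\<dots> = (\<Sum>z\<in>PiE {..<n} (V4 D). \<Prod>j<n. \<Sum>\<pi>\<in>{0,1,2}. cc k m j \<pi> * Wp \<pi> (z j) * Wp \<pi> (z (mps_nxt n j)))"
    by (intro sum.cong refl) (rule each(2))
  also have "\<dots> = (\<Sum>\<pi>\<in>PiE {..<n} (\<lambda>_. {0::nat,1,2}). (\<Prod>i<n. cc k m i (\<pi> i)) *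
              (\<Prod>j<n. \<Sum>v\<in>V4 D j. Wp (\<pi> j) v * Wp (\<pi> (prv n j)) v))"
    by (rule cyc_sum[where c="cc k m" and w="Wp"]) (auto simp: fin_V4)
  also have "\<dots> = (\<Sum>\<pi>\<in>PiE {..<n} (\<lambda>_. {0::nat,1,2}). (\<Prod>i<n. cc k m i (\<pi> i)) *
          (\<Prod>j<n. if \<pi> j = \<pi> (prv n j) then real (D j) ^ 2 else real (D j)))"
  proof (intro sum.cong refl arg_cong2[where f="(*)"] prod.cong)
    fix \<pi> j assume \<pi>: "\<pi> \<in> PiE {..<n} (\<lambda>_. {0::nat,1,2})" and j: "j \<in> {..<n}"
    then have "\<pi> j \<in> {0,1,2}" "\<pi> (prv n j) \<in> {0,1,2}" using prv_lt[of j n] by (auto simp: PiE_iff)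
    then show "(\<Sum>v\<in>V4 D j. Wp (\<pi> j) v * Wp (\<pi> (prv n j)) v) =
        (if \<pi> j = \<pi> (prv n j) then real (D j) ^ 2 else real (D j))" by (rule sum_V4_W)
  qed
  finally show "integral\<^sup>L \<mu> (\<lambda>A. Tk n d phi D x x' k A * Tk n d phi D x x' m A) =
      (\<Sum>\<pi>\<in>PiE {..<n} (\<lambda>_. {0::nat,1,2}). (\<Prod>i<n. cc k m i (\<pi> i)) *
          (\<Prod>j<n. if \<pi> j = \<pi> (prv n j) then real (D j) ^ 2 else real (D j)))" .
qed

end


definition kap :: "(nat \<Rightarrow> nat) \<Rightarrow> (nat \<Rightarrow> real \<Rightarrow> nat \<Rightarrow> real) \<Rightarrow> (nat \<Rightarrow> real) \<Rightarrow> (nat \<Rightarrow> real) \<Rightarrow> (nat \<Rightarrow> real)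
    \<Rightarrow> nat \<Rightarrow> nat \<Rightarrow> nat \<Rightarrow> nat \<Rightarrow> real" where
  "kap d phi \<sigma> x x' k m i \<pi> =
   (if \<pi> = 0 then (if i = k then 1 else (\<sigma> i)\<^sup>2 * feat_dot d phi i (x i) (x' i)) *
                   (if i = m then 1 else (\<sigma> i)\<^sup>2 * feat_dot d phi i (x i) (x' i))
    else if \<pi> = 1 then (if i \<noteq> k \<and> i \<noteq> m then (\<sigma> i)\<^sup>2 * (\<sigma> i)\<^sup>2 *
                   (feat_dot d phi i (x i) (x i) * feat_dot d phi i (x' i) (x' i)) else 0)
    else (if i \<noteq> k \<and> i \<noteq> m then (\<sigma> i)\<^sup>2 * (\<sigma> i)\<^sup>2 * (feat_dot d phi i (x i) (x' i))\<^sup>2 else 0))"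

context mps_set begin

lemma cc_kap:
  "(if i = k then r i else 1) * (if i = m then r i else 1) * cc k m i \<pi> = (r i)\<^sup>2 * kap d phi \<sigma> x x' k m i \<pi>"
  unfolding cc_def kap_def v_r \<alpha>_def[symmetric] \<beta>_def[symmetric] \<gamma>_def[symmetric]
  by (auto simp: power2_eq_square algebra_simps)

lemma r_delta: "k < n \<Longrightarrow> r k = (\<Prod>i<n. if i = k then r i else 1)"
  by (simp add: prod.delta)

lemma Rprod: "(\<Prod>i<n. r i) * (\<Prod>j<n. real (D j)) = 1"
proof -
  define s where "s j = sqrt (real (D j))" for j
  have spos: "s j > 0" if "j < n" for j using Dpos[OF that] by (simp add: s_def)
  have r: "r i = inverse (s i) * inverse (s (mps_nxt n i))" for i
    by (simp add: r_def s_def real_sqrt_mult divide_inverse)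
  have Dj: "real (D j) = s j * s j" for j by (simp add: s_def)
  have "(\<Prod>i<n. r i) * (\<Prod>j<n. real (D j)) =
        (\<Prod>i<n. inverse (s i)) * (\<Prod>i<n. inverse (s (mps_nxt n i))) * ((\<Prod>j<n. s j) * (\<Prod>j<n. s j))"
    unfolding r Dj by (simp add: prod.distrib)
  also have "(\<Prod>i<n. inverse (s (mps_nxt n i))) = (\<Prod>i<n. inverse (s i))"
    by (rule prod_nxt_reindex)
  also have "(\<Prod>i<n. inverse (s i)) * (\<Prod>i<n. inverse (s i)) * ((\<Prod>j<n. s j) * (\<Prod>j<n. s j)) =
     (\<Prod>i<n. inverse (s i) * s i) * (\<Prod>i<n. inverse (s i) * s i)"
    by (simp add: prod.distrib mult_ac)
  also have "(\<Prod>i<n. inverse (s i) * s i) = 1"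
  proof (intro prod.neutral ballI)
    fix i assume "i \<in> {..<n}"
    then have "s i > 0" using spos by simp
    then show "inverse (s i) * s i = 1" by simp
  qed
  finally show ?thesis by simp
qed

lemma Rprod2: "(\<Prod>i<n. (r i)\<^sup>2) * (\<Prod>j<n. (real (D j))\<^sup>2) = 1"
proof -
  have "(\<Prod>i<n. (r i)\<^sup>2) * (\<Prod>j<n. (real (D j))\<^sup>2) = ((\<Prod>i<n. r i) * (\<Prod>j<n. real (D j)))\<^sup>2"
    by (simp add: power_mult_distrib prod_power_distrib)
  then show ?thesis using Rprod by simp
qed

definition "qf \<pi> j = (if \<pi> j = \<pi> (prv n j) then 1 else 1 / real (D j))"

lemma term_eq:
  assumes k: "k < n" and m: "m < n"
  shows "r k * \<gamma> k * (r m * \<gamma> m) * ((\<Prod>i<n. cc k m i (\<pi> i)) *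
          (\<Prod>j<n. if \<pi> j = \<pi> (prv n j) then real (D j) ^ 2 else real (D j))) =
         \<gamma> k * \<gamma> m * (\<Prod>i<n. kap d phi \<sigma> x x' k m i (\<pi> i)) * (\<Prod>j<n. qf \<pi> j)"
proof -
  have "r k * r m * (\<Prod>i<n. cc k m i (\<pi> i)) =
     (\<Prod>i<n. (if i = k then r i else 1) * (if i = m then r i else 1) * cc k m i (\<pi> i))"
    unfolding r_delta[OF k] r_delta[OF m] by (simp add: prod.distrib)
  also have "\<dots> = (\<Prod>i<n. (r i)\<^sup>2) * (\<Prod>i<n. kap d phi \<sigma> x x' k m i (\<pi> i))"
    unfolding cc_kap by (simp add: prod.distrib)
  finally have 1: "r k * r m * (\<Prod>i<n. cc k m i (\<pi> i)) = (\<Prod>i<n. (r i)\<^sup>2) * (\<Prod>i<n. kap d phi \<sigma> x x' k m i (\<pi> i))" .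
  have "(\<Prod>j<n. if \<pi> j = \<pi> (prv n j) then real (D j) ^ 2 else real (D j)) =
        (\<Prod>j<n. (real (D j))\<^sup>2 * qf \<pi> j)"
  proof (intro prod.cong refl)
    fix j assume "j \<in> {..<n}"
    then have "real (D j) > 0" using Dpos[of j] by auto
    then show "(if \<pi> j = \<pi> (prv n j) then real (D j) ^ 2 else real (D j)) = (real (D j))\<^sup>2 * qf \<pi> j"
      by (simp add: qf_def power2_eq_square)
  qed
  also have "\<dots> = (\<Prod>j<n. (real (D j))\<^sup>2) * (\<Prod>j<n. qf \<pi> j)" by (simp add: prod.distrib)
  finally have 2: "(\<Prod>j<n. if \<pi> j = \<pi> (prv n j) then real (D j) ^ 2 else real (D j)) =
        (\<Prod>j<n. (real (D j))\<^sup>2) * (\<Prod>j<n. qf \<pi> j)" .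
  have "r k * \<gamma> k * (r m * \<gamma> m) * ((\<Prod>i<n. cc k m i (\<pi> i)) *
          (\<Prod>j<n. if \<pi> j = \<pi> (prv n j) then real (D j) ^ 2 else real (D j))) =
        \<gamma> k * \<gamma> m * (r k * r m * (\<Prod>i<n. cc k m i (\<pi> i))) * (\<Prod>j<n. if \<pi> j = \<pi> (prv n j) then real (D j) ^ 2 else real (D j))"
    by (simp add: mult_ac)
  also have "\<dots> = \<gamma> k * \<gamma> m * (\<Prod>i<n. kap d phi \<sigma> x x' k m i (\<pi> i)) * (\<Prod>j<n. qf \<pi> j) *
      ((\<Prod>i<n. (r i)\<^sup>2) * (\<Prod>j<n. (real (D j))\<^sup>2))"
    unfolding 1 2 by (simp add: mult_ac)
  also have "\<dots> = \<gamma> k * \<gamma> m * (\<Prod>i<n. kap d phi \<sigma> x x' k m i (\<pi> i)) * (\<Prod>j<n. qf \<pi> j)"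
    unfolding Rprod2 by simp
  finally show ?thesis .
qed

definition "Lk k = \<gamma> k * (\<Prod>l\<in>{..<n} - {k}. (\<sigma> l)\<^sup>2 * \<gamma> l)"

lemma ET_val:
  assumes k: "k < n"
  shows "r k * (\<gamma> k * ((\<Prod>i<n. c1 k i) * (\<Prod>j<n. real (D j)))) = Lk k"
proof -
  have "r k * (\<Prod>i<n. c1 k i) = (\<Prod>i<n. (if i = k then r i else 1) * c1 k i)"
    unfolding r_delta[OF k] by (simp add: prod.distrib)
  also have "\<dots> = (\<Prod>i<n. r i * (if i = k then 1 else (\<sigma> i)\<^sup>2 * \<gamma> i))"
    by (intro prod.cong refl) (simp add: c1_def v_r)
  also have "\<dots> = (\<Prod>i<n. r i) * (\<Prod>i<n. (if i = k then 1 else (\<sigma> i)\<^sup>2 * \<gamma> i))"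
    by (simp add: prod.distrib)
  also have "(\<Prod>i<n. (if i = k then 1 else (\<sigma> i)\<^sup>2 * \<gamma> i)) = (\<Prod>l\<in>{..<n} - {k}. (\<sigma> l)\<^sup>2 * \<gamma> l)"
    using k by (subst prod.remove[of _ k]) auto
  finally have "r k * (\<Prod>i<n. c1 k i) = (\<Prod>i<n. r i) * (\<Prod>l\<in>{..<n} - {k}. (\<sigma> l)\<^sup>2 * \<gamma> l)" .
  then have "r k * (\<gamma> k * ((\<Prod>i<n. c1 k i) * (\<Prod>j<n. real (D j)))) =
     \<gamma> k * (\<Prod>l\<in>{..<n} - {k}. (\<sigma> l)\<^sup>2 * \<gamma> l) * ((\<Prod>i<n. r i) * (\<Prod>j<n. real (D j)))"
    by (simp add: mult_ac)
  then show ?thesis unfolding Rprod Lk_def by simp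
qed

lemma kap0:
  "(\<Prod>i<n. kap d phi \<sigma> x x' k m i 0) = (\<Prod>l\<in>{..<n} - {k}. (\<sigma> l)\<^sup>2 * \<gamma> l) * (\<Prod>l\<in>{..<n} - {m}. (\<sigma> l)\<^sup>2 * \<gamma> l)"
  if "k < n" "m < n"
proof -
  have "(\<Prod>i<n. kap d phi \<sigma> x x' k m i 0) =
     (\<Prod>i<n. if i = k then 1 else (\<sigma> i)\<^sup>2 * \<gamma> i) * (\<Prod>i<n. if i = m then 1 else (\<sigma> i)\<^sup>2 * \<gamma> i)"
    unfolding kap_def \<gamma>_def by (simp add: prod.distrib)
  also have "(\<Prod>i<n. if i = k then 1 else (\<sigma> i)\<^sup>2 * \<gamma> i) = (\<Prod>l\<in>{..<n} - {k}. (\<sigma> l)\<^sup>2 * \<gamma> l)"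
    using that by (subst prod.remove[of _ k]) auto
  also have "(\<Prod>i<n. if i = m then 1 else (\<sigma> i)\<^sup>2 * \<gamma> i) = (\<Prod>l\<in>{..<n} - {m}. (\<sigma> l)\<^sup>2 * \<gamma> l)"
    using that by (subst prod.remove[of _ m]) auto
  finally show ?thesis .
qed

end


definition Cst :: "nat \<Rightarrow> (nat \<Rightarrow> nat) \<Rightarrow> (nat \<Rightarrow> real \<Rightarrow> nat \<Rightarrow> real) \<Rightarrow> (nat \<Rightarrow> real) \<Rightarrow> (nat \<Rightarrow> real) \<Rightarrow> (nat \<Rightarrow> real) \<Rightarrow> real" where
  "Cst n d phi \<sigma> x x' = (\<Sum>k<n. \<Sum>m<n. \<Sum>\<pi>\<in>PiE {..<n} (\<lambda>_. {0::nat,1,2}) - {(\<lambda>i\<in>{..<n}. 0)}.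
     \<bar>feat_dot d phi k (x k) (x' k) * feat_dot d phi m (x m) (x' m) * (\<Prod>i<n. kap d phi \<sigma> x x' k m i (\<pi> i))\<bar>)"

lemma Cst_nonneg: "Cst n d phi \<sigma> x x' \<ge> 0"
  unfolding Cst_def by (intro sum_nonneg) auto

lemma prv_Suc: "Suc j < n \<Longrightarrow> prv n (Suc j) = j"
proof -
  assume a: "Suc j < n"
  have "Suc j + n - 1 = j + n" by simp
  then show ?thesis using a by (simp add: prv_def)
qed

lemma const_cycle:
  assumes "\<And>j. j < n \<Longrightarrow> \<pi> j = \<pi> (prv n j)"
  shows "j < n \<Longrightarrow> \<pi> j = \<pi> 0"
proof (induction j)
  case 0 then show ?case by simp
next
  case (Suc j)
  then have "\<pi> (Suc j) = \<pi> (prv n (Suc j))" using assms by blast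
  also have "\<dots> = \<pi> j" using prv_Suc[OF Suc.prems] by simp
  finally show ?case using Suc by simp
qed

context mps_set begin

definition "Kf A = (\<Sum>k<n. r k * (\<gamma> k * Tk n d phi D x x' k A))"
definition "Ltot = (\<Sum>k<n. Lk k)"

lemma ntk_Kf: "mps_ntk n d phi D A x x' = Kf A"
  unfolding ntk_formula Kf_def r_def \<gamma>_def ..

lemma Kf_int: "integrable \<mu> Kf" "integral\<^sup>L \<mu> Kf = Ltot"
proof -
  have eq: "Kf = (\<lambda>A. \<Sum>k<n. r k * (\<gamma> k * Tk n d phi D x x' k A))" by (simp add: Kf_def[abs_def])
  show "integrable \<mu> Kf" unfolding eq
    by (intro Bochner_Integration.integrable_sum integrable_mult_right ET(1)) auto
  have "integral\<^sup>L \<mu> Kf = (\<Sum>k<n. r k * (\<gamma> k * integral\<^sup>L \<mu> (Tk n d phi D x x' k)))"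
    unfolding eq using ET(1) by (subst Bochner_Integration.integral_sum) auto
  also have "\<dots> = Ltot" unfolding Ltot_def by (intro sum.cong refl) (simp add: ET(2) ET_val)
  finally show "integral\<^sup>L \<mu> Kf = Ltot" .
qed

lemma Kf_sq: "Kf A * Kf A = (\<Sum>k<n. \<Sum>m<n. (r k * \<gamma> k * (r m * \<gamma> m)) * (Tk n d phi D x x' k A * Tk n d phi D x x' m A))"
  unfolding Kf_def sum_product by (intro sum.cong refl) (simp add: mult_ac)

abbreviation "PP \<equiv> PiE {..<n} (\<lambda>_. {0::nat,1,2})"
abbreviation "pz \<equiv> (\<lambda>i\<in>{..<n}. 0::nat)"

definition "Rm = (\<Sum>k<n. \<Sum>m<n. \<Sum>\<pi>\<in>PP - {pz}. \<gamma> k * \<gamma> m * (\<Prod>i<n. kap d phi \<sigma> x x' k m i (\<pi> i)) * (\<Prod>j<n. qf \<pi> j))"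

lemma Kf2_int: "integrable \<mu> (\<lambda>A. Kf A * Kf A)" "integral\<^sup>L \<mu> (\<lambda>A. Kf A * Kf A) = Ltot\<^sup>2 + Rm"
proof -
  have eq: "(\<lambda>A. Kf A * Kf A) = (\<lambda>A. \<Sum>k<n. \<Sum>m<n. (r k * \<gamma> k * (r m * \<gamma> m)) * (Tk n d phi D x x' k A * Tk n d phi D x x' m A))"
    by (simp add: Kf_sq)
  show "integrable \<mu> (\<lambda>A. Kf A * Kf A)" unfolding eq
    by (intro Bochner_Integration.integrable_sum integrable_mult_right ETT(1)) auto
  have "integral\<^sup>L \<mu> (\<lambda>A. Kf A * Kf A) = (\<Sum>k<n. \<Sum>m<n. (r k * \<gamma> k * (r m * \<gamma> m)) *
      integral\<^sup>L \<mu> (\<lambda>A. Tk n d phi D x x' k A * Tk n d phi D x x' m A))"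
    unfolding eq by (rule int_sum2(2)) (auto intro: ETT(1))
  also have "\<dots> = (\<Sum>k<n. \<Sum>m<n. \<Sum>\<pi>\<in>PP. \<gamma> k * \<gamma> m * (\<Prod>i<n. kap d phi \<sigma> x x' k m i (\<pi> i)) * (\<Prod>j<n. qf \<pi> j))"
    by (intro sum.cong refl) (simp add: ETT(2) sum_distrib_left term_eq)
  also have "\<dots> = (\<Sum>k<n. \<Sum>m<n. Lk k * Lk m) + Rm"
  proof -
    have pz: "pz \<in> PP" by auto
    have finP: "finite PP" by (intro finite_PiE) auto
    have "(\<Sum>\<pi>\<in>PP. \<gamma> k * \<gamma> m * (\<Prod>i<n. kap d phi \<sigma> x x' k m i (\<pi> i)) * (\<Prod>j<n. qf \<pi> j)) =
          Lk k * Lk m + (\<Sum>\<pi>\<in>PP - {pz}. \<gamma> k * \<gamma> m * (\<Prod>i<n. kap d phi \<sigma> x x' k m i (\<pi> i)) * (\<Prod>j<n. qf \<pi> j))"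
      if "k < n" "m < n" for k m
    proof -
      define f where "f \<pi> = \<gamma> k * \<gamma> m * (\<Prod>i<n. kap d phi \<sigma> x x' k m i (\<pi> i)) * (\<Prod>j<n. qf \<pi> j)" for \<pi>
      have "(\<Prod>i<n. kap d phi \<sigma> x x' k m i (pz i)) = (\<Prod>i<n. kap d phi \<sigma> x x' k m i 0)"
        by (intro prod.cong refl) simp
      moreover have "(\<Prod>j<n. qf pz j) = 1"
        by (intro prod.neutral) (simp add: qf_def prv_lt)
      ultimately have h: "f pz = Lk k * Lk m"
        unfolding f_def using kap0[OF that] by (simp add: Lk_def mult_ac)
      have "(\<Sum>\<pi>\<in>PP. f \<pi>) = Lk k * Lk m + (\<Sum>\<pi>\<in>PP - {pz}. f \<pi>)"
        using sum.remove[OF finP pz, of f] h by simp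
      then show ?thesis unfolding f_def .
    qed
    then show ?thesis unfolding Rm_def by (simp add: sum.distrib)
  qed
  also have "(\<Sum>k<n. \<Sum>m<n. Lk k * Lk m) = Ltot\<^sup>2"
    unfolding Ltot_def power2_eq_square sum_product ..
  finally show "integral\<^sup>L \<mu> (\<lambda>A. Kf A * Kf A) = Ltot\<^sup>2 + Rm" .
qed

end


lemma seq_ev_gen:
  "(\<And>D'. (\<forall>j<k. N \<le> D' j) \<Longrightarrow> (\<forall>j\<ge>k. D' j = D j) \<Longrightarrow> P D') \<Longrightarrow> seq_eventually k D P"
proof (induction k arbitrary: D)
  case 0
  have "P D" by (rule "0") auto
  then show ?case by simp
next
  case (Suc k)
  show ?case unfolding seq_eventually.simps
  proof (rule eventually_sequentiallyI[of N])
    fix m assume m: "N \<le> m"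
    show "seq_eventually k (D(k := m)) P"
    proof (rule Suc.IH)
      fix D' assume a: "\<forall>j<k. N \<le> D' j" and b: "\<forall>j\<ge>k. D' j = (D(k := m)) j"
      show "P D'"
      proof (rule Suc.prems)
        show "\<forall>j<Suc k. N \<le> D' j"
          using a b m by (metis fun_upd_same less_Suc_eq order_refl)
        show "\<forall>j\<ge>Suc k. D' j = D j"
          using b by auto
      qed
    qed
  qed
qed

lemma seq_ev: "(\<And>D'. (\<forall>j<k. N \<le> D' j) \<Longrightarrow> P D') \<Longrightarrow> seq_eventually k D P"
  by (rule seq_ev_gen) blast

context mps_set begin

lemma qf_bnd: "j < n \<Longrightarrow> 0 \<le> qf \<pi> j \<and> qf \<pi> j \<le> 1"
  using Dpos[of j] by (auto simp: qf_def)

lemma term_bnd: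
  assumes k: "k < n" and m: "m < n" and \<pi>: "\<pi> \<in> PP - {pz}" and N: "N \<ge> 1" and DN: "\<And>j. j < n \<Longrightarrow> D j \<ge> N"
  shows "\<gamma> k * \<gamma> m * (\<Prod>i<n. kap d phi \<sigma> x x' k m i (\<pi> i)) * (\<Prod>j<n. qf \<pi> j) \<le>
         \<bar>\<gamma> k * \<gamma> m * (\<Prod>i<n. kap d phi \<sigma> x x' k m i (\<pi> i))\<bar> / real N"
proof (cases "(\<Prod>i<n. kap d phi \<sigma> x x' k m i (\<pi> i)) = 0")
  case True show ?thesis unfolding True by simp
next
  case False
  have "\<exists>j<n. \<pi> j \<noteq> \<pi> (prv n j)"
  proof (rule ccontr)
    assume "\<not> (\<exists>j<n. \<pi> j \<noteq> \<pi> (prv n j))"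
    then have c: "\<And>j. j < n \<Longrightarrow> \<pi> j = \<pi> 0" using const_cycle[of n \<pi>] by blast
    have "\<pi> 0 \<noteq> 0"
    proof
      assume z: "\<pi> 0 = 0"
      have "\<pi> = pz"
      proof
        fix i show "\<pi> i = pz i"
          using \<pi> c[of i] z by (cases "i < n") (auto simp: PiE_iff extensional_def)
      qed
      then show False using \<pi> by simp
    qed
    moreover have "\<pi> 0 \<in> {0,1,2}" using \<pi> n1 by (auto simp: PiE_iff)
    ultimately have "kap d phi \<sigma> x x' k m k (\<pi> k) = 0"
      using c[OF k] by (auto simp: kap_def)
    then have "(\<Prod>i<n. kap d phi \<sigma> x x' k m i (\<pi> i)) = 0"
      using k by (intro prod_zero) auto
    then show False using False by simp
  qed
  then obtain j0 where j0: "j0 < n" "\<pi> j0 \<noteq> \<pi> (prv n j0)" by blast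
  have "(\<Prod>j<n. qf \<pi> j) = qf \<pi> j0 * (\<Prod>j\<in>{..<n}-{j0}. qf \<pi> j)"
    using j0 by (subst prod.remove[of _ j0]) auto
  also have "\<dots> \<le> qf \<pi> j0 * 1"
    using qf_bnd[OF j0(1)] qf_bnd by (intro mult_left_mono prod_le_1) auto
  also have "\<dots> = 1 / real (D j0)" using j0 by (simp add: qf_def)
  also have "\<dots> \<le> 1 / real N" using DN[OF j0(1)] N by (simp add: frac_le)
  finally have q1: "(\<Prod>j<n. qf \<pi> j) \<le> 1 / real N" .
  have q0: "0 \<le> (\<Prod>j<n. qf \<pi> j)" using qf_bnd by (intro prod_nonneg) auto
  define a where "a = \<gamma> k * \<gamma> m * (\<Prod>i<n. kap d phi \<sigma> x x' k m i (\<pi> i))"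
  have "a * (\<Prod>j<n. qf \<pi> j) \<le> \<bar>a\<bar> * (\<Prod>j<n. qf \<pi> j)"
    using q0 by (intro mult_right_mono) auto
  also have "\<dots> \<le> \<bar>a\<bar> * (1 / real N)" using q1 by (intro mult_left_mono) auto
  finally show ?thesis unfolding a_def by simp
qed

lemma Rm_bound:
  assumes N: "N \<ge> 1" and DN: "\<And>j. j < n \<Longrightarrow> D j \<ge> N"
  shows "Rm \<le> Cst n d phi \<sigma> x x' / real N"
proof -
  have "Rm \<le> (\<Sum>k<n. \<Sum>m<n. \<Sum>\<pi>\<in>PP - {pz}. \<bar>\<gamma> k * \<gamma> m * (\<Prod>i<n. kap d phi \<sigma> x x' k m i (\<pi> i))\<bar> / real N)"
    unfolding Rm_def by (intro sum_mono term_bnd[OF _ _ _ N DN]) auto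
  also have "\<dots> = Cst n d phi \<sigma> x x' / real N"
    unfolding Cst_def \<gamma>_def by (simp add: sum_divide_distrib)
  finally show ?thesis .
qed

lemma prob_mu: "prob_space \<mu>" by (rule prob_space_PiM) (simp add: prob_gN sdv_pos)

lemma var_eq:
  "integrable \<mu> (\<lambda>A. (Kf A - Ltot)\<^sup>2)" "integral\<^sup>L \<mu> (\<lambda>A. (Kf A - Ltot)\<^sup>2) = Rm"
proof -
  interpret prob_space \<mu> by (rule prob_mu)
  have eq: "(\<lambda>A. (Kf A - Ltot)\<^sup>2) = (\<lambda>A. Kf A * Kf A - 2 * Ltot * Kf A + Ltot\<^sup>2)"
    by (simp add: power2_eq_square algebra_simps)
  have ic: "integrable \<mu> (\<lambda>A. Ltot\<^sup>2)" by (rule finite_measure.integrable_const) unfold_locales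
  have i1: "integrable \<mu> (\<lambda>A. Kf A * Kf A - 2 * Ltot * Kf A)"
    using Kf2_int(1) Kf_int(1) by (intro Bochner_Integration.integrable_diff integrable_mult_right) auto
  show "integrable \<mu> (\<lambda>A. (Kf A - Ltot)\<^sup>2)" unfolding eq
    using i1 ic by (rule Bochner_Integration.integrable_add)
  have "integral\<^sup>L \<mu> (\<lambda>A. Kf A * Kf A - 2 * Ltot * Kf A + Ltot\<^sup>2) =
        integral\<^sup>L \<mu> (\<lambda>A. Kf A * Kf A - 2 * Ltot * Kf A) + integral\<^sup>L \<mu> (\<lambda>A. Ltot\<^sup>2)"
    using i1 ic by (rule Bochner_Integration.integral_add)
  also have "integral\<^sup>L \<mu> (\<lambda>A. Kf A * Kf A - 2 * Ltot * Kf A) =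
        integral\<^sup>L \<mu> (\<lambda>A. Kf A * Kf A) - integral\<^sup>L \<mu> (\<lambda>A. 2 * Ltot * Kf A)"
    using Kf2_int(1) Kf_int(1) by (intro Bochner_Integration.integral_diff integrable_mult_right) auto
  also have "integral\<^sup>L \<mu> (\<lambda>A. 2 * Ltot * Kf A) = 2 * Ltot * Ltot"
    using Kf_int by simp
  also have "integral\<^sup>L \<mu> (\<lambda>A. Ltot\<^sup>2) = Ltot\<^sup>2" by (simp add: prob_space)
  finally show "integral\<^sup>L \<mu> (\<lambda>A. (Kf A - Ltot)\<^sup>2) = Rm"
    unfolding eq Kf2_int(2) by (simp add: power2_eq_square)
qed

lemma Kf_meas: "Kf \<in> borel_measurable \<mu>"
  using Kf_int(1) by (rule borel_measurable_integrable)

lemma prob_bnd: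
  assumes e: "\<epsilon> > 0" and N: "N \<ge> 1" and DN: "\<And>j. j < n \<Longrightarrow> D j \<ge> N"
  shows "measure \<mu> {A \<in> space \<mu>. \<epsilon> < \<bar>Kf A - Ltot\<bar>} \<le> Cst n d phi \<sigma> x x' / real N / \<epsilon>\<^sup>2"
proof -
  interpret prob_space \<mu> by (rule prob_mu)
  have fm: "(\<lambda>A. Kf A - Ltot) \<in> borel_measurable \<mu>" using Kf_meas by measurable
  have "measure \<mu> {A \<in> space \<mu>. \<epsilon> < \<bar>Kf A - Ltot\<bar>} \<le> measure \<mu> {A \<in> space \<mu>. \<bar>Kf A - Ltot\<bar> \<ge> \<epsilon>}"
    using fm by (intro finite_measure_mono) auto
  also have "\<dots> \<le> integral\<^sup>L \<mu> (\<lambda>A. (Kf A - Ltot) ^ 2) / \<epsilon>\<^sup>2"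
    using fm var_eq(1) e by (intro second_moment_method) auto
  also have "\<dots> = Rm / \<epsilon>\<^sup>2" using var_eq(2) by simp
  also have "\<dots> \<le> Cst n d phi \<sigma> x x' / real N / \<epsilon>\<^sup>2"
    using Rm_bound[OF N DN] e by (intro divide_right_mono) auto
  finally show ?thesis .
qed

end


theorem theorem2:
  fixes n :: nat and d :: "nat \<Rightarrow> nat" and phi :: "nat \<Rightarrow> real \<Rightarrow> nat \<Rightarrow> real"
    and \<sigma> :: "nat \<Rightarrow> real" and x x' :: "nat \<Rightarrow> real"
  assumes "n \<ge> 1"
    and "\<And>i. i < n \<Longrightarrow> \<sigma> i > 0"
  defines "L \<equiv> (\<Sum>k<n. feat_dot d phi k (x k) (x' k) *
                 (\<Prod>l\<in>{..<n} - {k}. (\<sigma> l)\<^sup>2 * feat_dot d phi l (x l) (x' l)))"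
  shows "\<forall>\<epsilon>>0. \<forall>\<delta>>0. seq_eventually n (\<lambda>_. 0) (\<lambda>D.
           (\<lambda>A. mps_ntk n d phi D A x x') \<in> borel_measurable (mps_init n d \<sigma> D) \<and>
           measure (mps_init n d \<sigma> D)
             {A \<in> space (mps_init n d \<sigma> D). \<epsilon> < \<bar>mps_ntk n d phi D A x x' - L\<bar>} < \<delta>)"
proof (intro allI impI)
  fix \<epsilon> \<delta> :: real assume e: "\<epsilon> > 0" and dl: "\<delta> > 0"
  define C where "C = Cst n d phi \<sigma> x x'"
  have C0: "C \<ge> 0" unfolding C_def by (rule Cst_nonneg)
  define N where "N = nat \<lceil>C / (\<epsilon>\<^sup>2 * \<delta>)\<rceil> + 1"
  have N1: "N \<ge> 1" by (simp add: N_def)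
  have "C / (\<epsilon>\<^sup>2 * \<delta>) < real N"
  proof -
    have "C / (\<epsilon>\<^sup>2 * \<delta>) \<le> real (nat \<lceil>C / (\<epsilon>\<^sup>2 * \<delta>)\<rceil>)" by linarith
    then show ?thesis by (simp add: N_def)
  qed
  then have "C < real N * (\<epsilon>\<^sup>2 * \<delta>)" using e dl by (simp add: divide_less_eq mult.commute)
  then have NC: "C / real N / \<epsilon>\<^sup>2 < \<delta>" using e N1 by (simp add: divide_less_eq mult_ac)
  show "seq_eventually n (\<lambda>_. 0) (\<lambda>D.
           (\<lambda>A. mps_ntk n d phi D A x x') \<in> borel_measurable (mps_init n d \<sigma> D) \<and>
           measure (mps_init n d \<sigma> D)
             {A \<in> space (mps_init n d \<sigma> D). \<epsilon> < \<bar>mps_ntk n d phi D A x x' - L\<bar>} < \<delta>)"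
  proof (rule seq_ev[of n N])
    fix D' :: "nat \<Rightarrow> nat" assume DN: "\<forall>j<n. N \<le> D' j"
    interpret M: mps_set n d phi \<sigma> x x' D'
      by unfold_locales (use assms(1,2) DN N1 in auto)
    have ntk: "(\<lambda>A. mps_ntk n d phi D' A x x') = M.Kf" by (rule ext) (rule M.ntk_Kf)
    have LL: "L = M.Ltot" unfolding L_def M.Ltot_def M.Lk_def M.\<gamma>_def ..
    have "measure (PiM M.I (gN M.sdv)) {A \<in> space (PiM M.I (gN M.sdv)). \<epsilon> < \<bar>M.Kf A - M.Ltot\<bar>} \<le> C / real N / \<epsilon>\<^sup>2"
      unfolding C_def using DN by (intro M.prob_bnd[OF e N1]) auto
    then show "(\<lambda>A. mps_ntk n d phi D' A x x') \<in> borel_measurable (mps_init n d \<sigma> D') \<and>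
           measure (mps_init n d \<sigma> D')
             {A \<in> space (mps_init n d \<sigma> D'). \<epsilon> < \<bar>mps_ntk n d phi D' A x x' - L\<bar>} < \<delta>"
      unfolding M.init_eq LL ntk[unfolded fun_eq_iff, rule_format] ntk using M.Kf_meas NC by auto
  qed
qed


end
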